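(* There is a sign $\epsilon = \pm 1$ such that the family $\epsilon\tilde{\alpha}_0 h', \dots, \epsilon\tilde{\alpha}_r h'$ is a uniform positive dual family to $\underline{a} = (au_0, \dots, au_r)$ in $L$. Therefore there exists a positive integer $l$ such that for all $0 \leq j \leq r$, $au_j(\epsilon\tilde{\alpha}_j h') = lt$ and $au_k(\epsilon\tilde{\alpha}_j h') = 0$ for $k \neq j$ (i.e. $\underline{a} \cdot (\epsilon\tilde{\underline{\alpha}} h') = lt I_{r+1}$). The value of $l$ is given by the following equality, which holds in $\mathbb{Z}$: $$\epsilon \lambda l t = \frac{\mathcal{N}(h')}{\mathcal{N}(L)} \tilde{\lambda} \tilde{t}.$$
   Context: Let $\mathbb{K}$ be a number field of degree $d = r+2 \geq 2$ with exactly one pair of complex embeddings, with embeddings ordered $\sigma_1, \dots, \sigma_r$ (real), $\sigma_{r+1}$ (complex) and $\sigma_{r+2} = \overline{\sigma_{r+1}}$. A $\mathbb{Q}$-basis $(e_1, \dots, e_d)$ of $\mathbb{K}$ is called positive if $i\cdot\det((\sigma_j(e_k))_{1 \leq j,k\leq d}) > 0$. Let $\mathfrak{f} \neq \mathcal{O}_{\mathbb{K}}$ be an integral ideal, $q\mathbb{Z} = \mathfrak{f} \cap \mathbb{Z}$, $\mathfrak{b}$ an integral ideal coprime to $\mathfrak{f}$, $L = \mathfrak{f}\mathfrak{b}^{-1}$, and $\mathfrak{a}$ an integral ideal coprime to $\mathfrak{f}\mathfrak{b}$ of norm $N$ with $\mathfrak{a}^{-1}L/L$ cyclic. Let $h \in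 L$ be admissible, i.e. $h/q \equiv 1 \bmod L$ and $h/N$ generates $\mathfrak{a}^{-1}L/L$. Write $h = mh'$ with $m$ a positive integer and $h'$ primitive in $L$. Let $u_1, \dots, u_r$ be totally positive units congruent to $1$ mod $\mathfrak{f}$ (obtained from a system of fundamental units of this group) such that $1, u_1, \dots, u_r$ are linearly independent; put $u_0 = 1$. Choose a positive $\mathbb{Z}$-basis $B_L = (e_0 = h', e_1, \dots, e_{r+1})$ of $L$ with $u_jh' = \sum_{k=0}^j c_{jk0}e_k$, $c_{jk0} \in \mathbb{Z}$, $c_{jj0} > 0$. Put $\lambda = \prod_{j=1}^r c_{jj0}$ and let $a \in \mathrm{Hom}_{\mathbb{Z}}(L, \mathbb{Z})$ be defined by $\lambda a = \det_{B_L}(h', u_1h', \dots, u_rh', \cdot)$; write $au_j$ for the linear form $x \mapsto a(u_jx)$. Let $\mathcal{A}$ be the square matrix of size $r+1$ of the coefficients of $au_0, \dots, au_r$ on the last $r+1$ vectors of the dual basis of $B_L$ (the first coefficients are all $0$), with Smith elementary divisors $[A_r, \dots, A_1, 1]$ ($A_i | A_{i+1}$), and put $t = A_r$. A positive dual family to $\underline{a}$ in $L$ is a family $\alpha_0, \dots, \alpha_r \in L$ with $au_j(\alpha_j) > 0$ and $au_k(\alpha_j) = 0$ for $k \neq j$; it is uniform if $au_j(\alpha_j)$ is independent of $j$. It is known (previous lemma) that for any uniform positive dual family $\alpha'$ with $au_j(\alpha'_j) = n$, $t$ divides $n$. Similarly, choose a positive basis $B_{\mathbb{K}} = (1, \tilde{e}_1,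 \dots, \tilde{e}_{r+1})$ of $\mathcal{O}_{\mathbb{K}}$ with $u_j = \sum_{k=0}^j \tilde{c}_{jk0}\tilde{e}_k$, $\tilde{c}_{jj0} > 0$; put $\tilde{\lambda} = \prod_{j=1}^r \tilde{c}_{jj0}$ and define $\tilde{a}$ by $\tilde{\lambda}\tilde{a} = \det_{B_{\mathbb{K}}}(1, u_1, \dots, u_r, \cdot)$. Let $\tilde{\mathcal{A}}$ be the analogous square matrix for $(\tilde{a}, \tilde{a}u_1, \dots, \tilde{a}u_r)$, with elementary divisors $[\tilde{A}_r, \dots, \tilde{A}_1, 1]$, and put $\tilde{t} = \tilde{A}_r$. Let $\tilde{\alpha}_0, \dots, \tilde{\alpha}_r \in \mathcal{O}_{\mathbb{K}}$ be given by the columns of $(\prod_{i=1}^r \tilde{A}_i^{-1})\mathrm{com}(\tilde{\mathcal{A}})^T$, so that $\tilde{a}u_j(\tilde{\alpha}_j) = \tilde{t}$ and $\tilde{a}u_k(\tilde{\alpha}_j) = 0$ for $k \neq j$. Here $\mathcal{N}(h')$ is the norm of the element $h'$ and $\mathcal{N}(L)$ the norm of the fractional ideal $L$. *)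

theory Defs
  imports Complex_Main "HOL-Computational_Algebra.Polynomial" "Jordan_Normal_Form.Determinant"
begin

definition is_subfield :: "complex set \<Rightarrow> bool" where
  "is_subfield K \<longleftrightarrow> 0 \<in> K \<and> 1 \<in> K \<and> (\<forall>x\<in>K. \<forall>y\<in>K. x + y \<in> K \<and> x * y \<in> K)
     \<and> (\<forall>x\<in>K. - x \<in> K \<and> inverse x \<in> K)"

definition Q_comb :: "complex list \<Rightarrow> (nat \<Rightarrow> rat) \<Rightarrow> complex" where
  "Q_comb es c = (\<Sum>k<length es. of_rat (c k) * es ! k)"

definition Z_comb :: "complex list \<Rightarrow> (nat \<Rightarrow> int) \<Rightarrow> complex" where
  "Z_comb es c = (\<Sum>k<length es. of_int (c k) * es ! k)"

definition Q_indep :: "complex list \<Rightarrow> bool" where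
  "Q_indep es \<longleftrightarrow> (\<forall>c. Q_comb es c = 0 \<longrightarrow> (\<forall>k<length es. c k = 0))"

definition Z_indep :: "complex list \<Rightarrow> bool" where
  "Z_indep es \<longleftrightarrow> (\<forall>c. Z_comb es c = 0 \<longrightarrow> (\<forall>k<length es. c k = 0))"

definition Q_span :: "complex list \<Rightarrow> complex set" where
  "Q_span es = range (Q_comb es)"

definition Z_span :: "complex list \<Rightarrow> complex set" where
  "Z_span es = range (Z_comb es)"

definition Z_basis :: "complex list \<Rightarrow> complex set \<Rightarrow> bool" where
  "Z_basis es S \<longleftrightarrow> Z_indep es \<and> Z_span es = S"

definition number_field_of_degree :: "complex set \<Rightarrow> nat \<Rightarrow> bool" where
  "number_field_of_degree K d \<longleftrightarrow> is_subfield K \<and>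
     (\<exists>es. length es = d \<and> set es \<subseteq> K \<and> Q_indep es \<and> Q_span es = K)"

definition is_embedding :: "complex set \<Rightarrow> (complex \<Rightarrow> complex) \<Rightarrow> bool" where
  "is_embedding K \<sigma> \<longleftrightarrow> \<sigma> 1 = 1 \<and>
     (\<forall>x\<in>K. \<forall>y\<in>K. \<sigma> (x + y) = \<sigma> x + \<sigma> y \<and> \<sigma> (x * y) = \<sigma> x * \<sigma> y)"

text \<open>The embeddings of K (degree r+2), indexed from 0: \<open>\<sigma> 0, \<dots>, \<sigma> (r-1)\<close> real,
  \<open>\<sigma> r\<close> complex (non-real) and \<open>\<sigma> (r+1)\<close> its complex conjugate.\<close>
definition embeddings_one_complex_pair ::
  "complex set \<Rightarrow> nat \<Rightarrow> (nat \<Rightarrow> complex \<Rightarrow> complex) \<Rightarrow> bool" where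
  "embeddings_one_complex_pair K r \<sigma> \<longleftrightarrow>
     (\<forall>j<r+2. is_embedding K (\<sigma> j))
   \<and> (\<forall>i<r+2. \<forall>j<r+2. i \<noteq> j \<longrightarrow> (\<exists>x\<in>K. \<sigma> i x \<noteq> \<sigma> j x))
   \<and> (\<forall>\<tau>. is_embedding K \<tau> \<longrightarrow> (\<exists>j<r+2. \<forall>x\<in>K. \<tau> x = \<sigma> j x))
   \<and> (\<forall>j<r. \<forall>x\<in>K. \<sigma> j x \<in> \<real>)
   \<and> (\<forall>x\<in>K. \<sigma> (r+1) x = cnj (\<sigma> r x))
   \<and> (\<exists>x\<in>K. \<sigma> r x \<notin> \<real>)"

definition alg_int :: "complex \<Rightarrow> bool" where
  "alg_int x \<longleftrightarrow> (\<exists>p :: int poly. lead_coeff p = 1 \<and> poly (map_poly of_int p) x = 0)"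

definition ring_of_integers :: "complex set \<Rightarrow> complex set" where
  "ring_of_integers K = {x \<in> K. alg_int x}"

definition is_ideal :: "complex set \<Rightarrow> complex set \<Rightarrow> bool" where
  "is_ideal OK I \<longleftrightarrow> I \<subseteq> OK \<and> 0 \<in> I \<and> (\<forall>x\<in>I. \<forall>y\<in>I. x + y \<in> I)
     \<and> (\<forall>r\<in>OK. \<forall>x\<in>I. r * x \<in> I)"

definition integral_ideal :: "complex set \<Rightarrow> complex set \<Rightarrow> bool" where
  "integral_ideal OK I \<longleftrightarrow> is_ideal OK I \<and> I \<noteq> {0}"

definition set_mult :: "complex set \<Rightarrow> complex set \<Rightarrow> complex set" where
  "set_mult I J = {sum_list (map2 (*) xs ys) | xs ys.
      length xs = length ys \<and> set xs \<subseteq> I \<and> set ys \<subseteq> J}"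

definition ideal_sum :: "complex set \<Rightarrow> complex set \<Rightarrow> complex set" where
  "ideal_sum I J = {x + y | x y. x \<in> I \<and> y \<in> J}"

definition coprime_ideals :: "complex set \<Rightarrow> complex set \<Rightarrow> complex set \<Rightarrow> bool" where
  "coprime_ideals OK I J \<longleftrightarrow> ideal_sum I J = OK"

definition frac_inv :: "complex set \<Rightarrow> complex set \<Rightarrow> complex set \<Rightarrow> complex set" where
  "frac_inv K OK I = {x \<in> K. \<forall>y\<in>I. x * y \<in> OK}"

definition ideal_index :: "complex set \<Rightarrow> complex set \<Rightarrow> nat" where
  "ideal_index OK I = card ((\<lambda>x. {y \<in> OK. y - x \<in> I}) ` OK)"

text \<open>Norm of a fractional ideal I of a number field of degree d:
  \<open>N(I) = [O : cI] / c^d\<close> for the least positive integer c with \<open>cI \<subseteq> O\<close>.\<close>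
definition frac_ideal_norm :: "complex set \<Rightarrow> nat \<Rightarrow> complex set \<Rightarrow> real" where
  "frac_ideal_norm OK d I =
     (let c = (LEAST c::nat. c > 0 \<and> (\<forall>x\<in>I. of_nat c * x \<in> OK))
      in real (ideal_index OK ((\<lambda>x. of_nat c * x) ` I)) / real c ^ d)"

text \<open>\<open>M/L\<close> is cyclic (as additive group), for \<open>L \<subseteq> M\<close>.\<close>
definition cyclic_quot :: "complex set \<Rightarrow> complex set \<Rightarrow> bool" where
  "cyclic_quot M L \<longleftrightarrow> (\<exists>g\<in>M. \<forall>x\<in>M. \<exists>k::int. x - of_int k * g \<in> L)"

text \<open>h admissible: \<open>h \<in> L\<close>, \<open>h/q \<equiv> 1 mod L\<close>, and \<open>h/N\<close> generates \<open>a\<^sup>-\<^sup>1L/L\<close>.\<close>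
definition admissible ::
  "complex set \<Rightarrow> complex set \<Rightarrow> int \<Rightarrow> nat \<Rightarrow> complex \<Rightarrow> bool" where
  "admissible L aL q N h \<longleftrightarrow> h \<in> L \<and> h / of_int q - 1 \<in> L \<and> h / of_nat N \<in> aL
     \<and> (\<forall>x\<in>aL. \<exists>k::int. x - of_int k * (h / of_nat N) \<in> L)"

definition primitive_in :: "complex set \<Rightarrow> complex \<Rightarrow> bool" where
  "primitive_in L x \<longleftrightarrow> x \<in> L \<and> x \<noteq> 0 \<and> (\<forall>n::int. \<forall>y\<in>L. x = of_int n * y \<longrightarrow> \<bar>n\<bar> = 1)"

definition elt_norm :: "(nat \<Rightarrow> complex \<Rightarrow> complex) \<Rightarrow> nat \<Rightarrow> complex \<Rightarrow> complex" where
  "elt_norm \<sigma> d x = (\<Prod>j<d. \<sigma> j x)"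

definition totally_positive :: "(nat \<Rightarrow> complex \<Rightarrow> complex) \<Rightarrow> nat \<Rightarrow> complex \<Rightarrow> bool" where
  "totally_positive \<sigma> r x \<longleftrightarrow> (\<forall>j<r. \<sigma> j x \<in> \<real> \<and> Re (\<sigma> j x) > 0)"

definition is_unit_of :: "complex set \<Rightarrow> complex \<Rightarrow> bool" where
  "is_unit_of OK x \<longleftrightarrow> x \<in> OK \<and> x \<noteq> 0 \<and> inverse x \<in> OK"

definition positive_basis :: "(nat \<Rightarrow> complex \<Rightarrow> complex) \<Rightarrow> nat \<Rightarrow> complex list \<Rightarrow> bool" where
  "positive_basis \<sigma> d es \<longleftrightarrow> length es = d \<and>
     (let D = det (mat d d (\<lambda>(j, k). \<sigma> j (es ! k))) in \<i> * D \<in> \<real> \<and> Re (\<i> * D) > 0)"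

definition coord :: "complex list \<Rightarrow> complex \<Rightarrow> nat \<Rightarrow> rat" where
  "coord es x = (THE c. (\<forall>k. length es \<le> k \<longrightarrow> c k = 0) \<and> Q_comb es c = x)"

definition det_wrt :: "complex list \<Rightarrow> complex list \<Rightarrow> rat" where
  "det_wrt es vs = det (mat (length es) (length es) (\<lambda>(i, k). coord es (vs ! k) i))"

definition triangular_wrt :: "complex list \<Rightarrow> (nat \<Rightarrow> complex) \<Rightarrow> nat \<Rightarrow> complex \<Rightarrow> bool" where
  "triangular_wrt es u r g \<longleftrightarrow> es ! 0 = g \<and>
     (\<forall>j\<in>{1..r}. coord es (u j * g) j > 0 \<and> (\<forall>k. j < k \<longrightarrow> coord es (u j * g) k = 0))"

definition lam_wrt :: "complex list \<Rightarrow> (nat \<Rightarrow> complex) \<Rightarrow> nat \<Rightarrow> complex \<Rightarrow> rat" where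
  "lam_wrt es u r g = (\<Prod>j\<in>{1..r}. coord es (u j * g) j)"

text \<open>The linear form a defined by \<open>\<lambda> a = det_B(g, u_1 g, \<dots>, u_r g, \<cdot>)\<close> (with \<open>u_0 = 1\<close>).\<close>
definition lin_form ::
  "complex list \<Rightarrow> (nat \<Rightarrow> complex) \<Rightarrow> nat \<Rightarrow> complex \<Rightarrow> rat \<Rightarrow> complex \<Rightarrow> rat" where
  "lin_form es u r g lam x = det_wrt es (map (\<lambda>j. u j * g) [0..<r+1] @ [x]) / lam"

text \<open>Matrix of the coefficients of \<open>au_0,\<dots>,au_r\<close> on the last r+1 dual basis vectors.\<close>
definition coeff_mat :: "complex list \<Rightarrow> (nat \<Rightarrow> complex) \<Rightarrow> nat \<Rightarrow> (complex \<Rightarrow> rat) \<Rightarrow> rat mat" where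
  "coeff_mat es u r af = mat (r+1) (r+1) (\<lambda>(j, k). af (u j * es ! (k+1)))"

definition smith_elementary_divisors :: "rat mat \<Rightarrow> nat \<Rightarrow> (nat \<Rightarrow> int) \<Rightarrow> bool" where
  "smith_elementary_divisors M n D \<longleftrightarrow>
     (\<exists>P Q. P \<in> carrier_mat n n \<and> Q \<in> carrier_mat n n
        \<and> (\<forall>i<n. \<forall>j<n. P $$ (i, j) \<in> \<int> \<and> Q $$ (i, j) \<in> \<int>)
        \<and> det P \<in> {1, -1} \<and> det Q \<in> {1, -1}
        \<and> P * M * Q = mat n n (\<lambda>(i, j). if i = j then of_int (D i) else 0))
   \<and> (\<forall>i<n. 0 \<le> D i) \<and> (\<forall>i. Suc i < n \<longrightarrow> D i dvd D (Suc i))"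

definition pos_dual_family ::
  "complex set \<Rightarrow> (nat \<Rightarrow> complex \<Rightarrow> rat) \<Rightarrow> nat \<Rightarrow> (nat \<Rightarrow> complex) \<Rightarrow> bool" where
  "pos_dual_family L af r \<alpha> \<longleftrightarrow>
     (\<forall>j\<le>r. \<alpha> j \<in> L \<and> af j (\<alpha> j) > 0 \<and> (\<forall>k\<le>r. k \<noteq> j \<longrightarrow> af k (\<alpha> j) = 0))"

definition uniform_pos_dual_family ::
  "complex set \<Rightarrow> (nat \<Rightarrow> complex \<Rightarrow> rat) \<Rightarrow> nat \<Rightarrow> (nat \<Rightarrow> complex) \<Rightarrow> bool" where
  "uniform_pos_dual_family L af r \<alpha> \<longleftrightarrow> pos_dual_family L af r \<alpha>
     \<and> (\<forall>j\<le>r. \<forall>k\<le>r. af j (\<alpha> j) = af k (\<alpha> k))"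

end

theory Submission
  imports Defs
begin

lemma sf_0: "is_subfield K \<Longrightarrow> 0 \<in> K" and sf_1: "is_subfield K \<Longrightarrow> 1 \<in> K"
  and sf_add: "is_subfield K \<Longrightarrow> x \<in> K \<Longrightarrow> y \<in> K \<Longrightarrow> x + y \<in> K"
  and sf_mult: "is_subfield K \<Longrightarrow> x \<in> K \<Longrightarrow> y \<in> K \<Longrightarrow> x * y \<in> K"
  and sf_uminus: "is_subfield K \<Longrightarrow> x \<in> K \<Longrightarrow> - x \<in> K"
  and sf_inverse: "is_subfield K \<Longrightarrow> x \<in> K \<Longrightarrow> inverse x \<in> K"
  unfolding is_subfield_def by auto

lemma sf_diff: "is_subfield K \<Longrightarrow> x \<in> K \<Longrightarrow> y \<in> K \<Longrightarrow> x - y \<in> K"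
  using sf_add[of K x "-y"] sf_uminus[of K y] by simp

lemma sf_divide: "is_subfield K \<Longrightarrow> x \<in> K \<Longrightarrow> y \<in> K \<Longrightarrow> x / y \<in> K"
  using sf_mult[of K x "inverse y"] sf_inverse[of K y] by (simp add: divide_inverse)

lemma sf_of_nat: "is_subfield K \<Longrightarrow> of_nat n \<in> K"
  by (induct n) (auto intro: sf_add sf_0 sf_1)

lemma sf_of_int: "is_subfield K \<Longrightarrow> of_int k \<in> K"
proof (cases "k \<ge> 0")
  case True
  then show "is_subfield K \<Longrightarrow> of_int k \<in> K"
    using sf_of_nat[of K "nat k"] by simp
next
  case False
  then show "is_subfield K \<Longrightarrow> of_int k \<in> K"
    using sf_of_nat[of K "nat (-k)"] sf_uminus[of K "of_nat (nat (-k))"] by simp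
qed

lemma sf_of_rat: assumes "is_subfield K" shows "of_rat q \<in> K"
proof -
  obtain a b where "quotient_of q = (a, b)" by (cases "quotient_of q")
  then have "q = of_int a / of_int b" by (simp add: quotient_of_div)
  then have "(of_rat q :: complex) = of_int a / of_int b" by (simp add: of_rat_divide)
  then show ?thesis using sf_divide[OF assms sf_of_int[OF assms] sf_of_int[OF assms]] by simp
qed

lemma sf_sum: "is_subfield K \<Longrightarrow> (\<And>i. i \<in> A \<Longrightarrow> f i \<in> K) \<Longrightarrow> sum f A \<in> K"
  by (induct A rule: infinite_finite_induct) (auto intro: sf_add sf_0)

lemma sf_prod: "is_subfield K \<Longrightarrow> (\<And>i. i \<in> A \<Longrightarrow> f i \<in> K) \<Longrightarrow> prod f A \<in> K"
  by (induct A rule: infinite_finite_induct) (auto intro: sf_mult sf_1)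

section \<open>Rational combinations and coordinates\<close>

lemma Q_comb_in: "is_subfield K \<Longrightarrow> set es \<subseteq> K \<Longrightarrow> Q_comb es c \<in> K"
  unfolding Q_comb_def by (intro sf_sum) (auto intro!: sf_mult sf_of_rat)

lemma Q_comb_add: "Q_comb es (\<lambda>k. c k + c' k) = Q_comb es c + Q_comb es c'"
  unfolding Q_comb_def by (simp add: of_rat_add distrib_right sum.distrib)

lemma Q_comb_diff: "Q_comb es (\<lambda>k. c k - c' k) = Q_comb es c - Q_comb es c'"
  unfolding Q_comb_def by (simp add: of_rat_diff left_diff_distrib sum_subtractf)

lemma Q_comb_scale: "Q_comb es (\<lambda>k. a * c k) = of_rat a * Q_comb es c"
  unfolding Q_comb_def by (simp add: of_rat_mult sum_distrib_left mult.assoc)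

lemma Q_comb_cong: "(\<And>k. k < length es \<Longrightarrow> c k = c' k) \<Longrightarrow> Q_comb es c = Q_comb es c'"
  unfolding Q_comb_def by simp

lemma Q_comb_zero: "Q_comb es (\<lambda>k. 0) = 0"
  unfolding Q_comb_def by simp

lemma Q_comb_sum: "finite A \<Longrightarrow> Q_comb es (\<lambda>k. \<Sum>i\<in>A. c i k) = (\<Sum>i\<in>A. Q_comb es (c i))"
proof (induct A rule: finite_induct)
  case empty
  then show ?case by (simp add: Q_comb_zero)
next
  case (insert x F)
  then show ?case using Q_comb_add[of es "c x" "\<lambda>k. \<Sum>i\<in>F. c i k"] by simp
qed

lemma Q_comb_delta: "j < length es \<Longrightarrow> Q_comb es (\<lambda>k. if k = j then 1 else 0) = es ! j"
proof -
  assume j: "j < length es"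
  have "(\<lambda>k. of_rat (if k = j then 1 else 0) * es ! k) = (\<lambda>k. if k = j then es ! k else 0)"
    by auto
  then show ?thesis unfolding Q_comb_def using j by (simp only:) (simp add: sum.delta)
qed

lemma coord_eq:
  assumes ind: "Q_indep es"
  shows "coord es (Q_comb es c) = (\<lambda>k. if k < length es then c k else 0)"
proof -
  let ?c = "\<lambda>k. if k < length es then c k else 0"
  have P: "(\<forall>k. length es \<le> k \<longrightarrow> ?c k = 0) \<and> Q_comb es ?c = Q_comb es c"
    by (auto intro: Q_comb_cong)
  show ?thesis unfolding coord_def
  proof (rule the_equality)
    show "(\<forall>k. length es \<le> k \<longrightarrow> ?c k = 0) \<and> Q_comb es ?c = Q_comb es c" using P .
    fix c' assume c': "(\<forall>k. length es \<le> k \<longrightarrow> c' k = 0) \<and> Q_comb es c' = Q_comb es c"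
    have "Q_comb es (\<lambda>k. c' k - ?c k) = 0"
      using c' P by (simp add: Q_comb_diff)
    then have "\<forall>k<length es. c' k - ?c k = 0" using ind unfolding Q_indep_def by blast
    then show "c' = ?c" using c' by (auto simp: fun_eq_iff)
  qed
qed

lemma coord_Q_comb: "Q_indep es \<Longrightarrow> k < length es \<Longrightarrow> coord es (Q_comb es c) k = c k"
  by (simp add: coord_eq)

lemma coord_Q_comb_ge: "Q_indep es \<Longrightarrow> length es \<le> k \<Longrightarrow> coord es (Q_comb es c) k = 0"
  by (simp add: coord_eq)

lemma coord_basis: "Q_indep es \<Longrightarrow> j < length es \<Longrightarrow> coord es (es ! j) k = (if k = j then 1 else 0)"
  using coord_eq[of es "\<lambda>k. if k = j then 1 else 0"] by (simp add: Q_comb_delta)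

lemma Q_comb_coord: "Q_indep es \<Longrightarrow> x \<in> Q_span es \<Longrightarrow> Q_comb es (coord es x) = x"
  unfolding Q_span_def by (auto simp: coord_eq intro: Q_comb_cong)

lemma coord_add: "Q_indep es \<Longrightarrow> x \<in> Q_span es \<Longrightarrow> y \<in> Q_span es \<Longrightarrow>
   coord es (x + y) k = coord es x k + coord es y k"
  unfolding Q_span_def by (auto simp: coord_eq Q_comb_add[symmetric])

lemma coord_diff: "Q_indep es \<Longrightarrow> x \<in> Q_span es \<Longrightarrow> y \<in> Q_span es \<Longrightarrow>
   coord es (x - y) k = coord es x k - coord es y k"
  unfolding Q_span_def by (auto simp: coord_eq Q_comb_diff[symmetric])

lemma coord_scale: "Q_indep es \<Longrightarrow> x \<in> Q_span es \<Longrightarrow>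
   coord es (of_rat a * x) k = a * coord es x k"
  unfolding Q_span_def by (auto simp: coord_eq Q_comb_scale[symmetric])

lemma Q_span_add: "x \<in> Q_span es \<Longrightarrow> y \<in> Q_span es \<Longrightarrow> x + y \<in> Q_span es"
  unfolding Q_span_def by (auto simp: Q_comb_add[symmetric])

lemma Q_span_scale: "x \<in> Q_span es \<Longrightarrow> of_rat a * x \<in> Q_span es"
  unfolding Q_span_def by (auto simp: Q_comb_scale[symmetric])

lemma Q_span_0: "0 \<in> Q_span es"
  unfolding Q_span_def using Q_comb_zero by (metis rangeI)

lemma Q_span_sum: "(\<And>i. i \<in> A \<Longrightarrow> f i \<in> Q_span es) \<Longrightarrow> sum f A \<in> Q_span es"
  by (induct A rule: infinite_finite_induct) (auto intro: Q_span_add Q_span_0)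

lemma coord_sum: assumes "Q_indep es" "finite A" "\<And>i. i \<in> A \<Longrightarrow> f i \<in> Q_span es" shows
   "coord es (sum f A) k = (\<Sum>i\<in>A. coord es (f i) k)"
  using assms(2,3)
proof (induct A rule: finite_induct)
  case empty
  then show ?case using assms(1) coord_eq[of es "\<lambda>_. 0"] by (simp add: Q_comb_zero)
next
  case (insert a A)
  then show ?case using assms(1) by (simp add: coord_add Q_span_sum)
qed

lemma Z_comb_Q: "Z_comb es z = Q_comb es (\<lambda>k. of_int (z k))"
  unfolding Z_comb_def Q_comb_def by simp

lemma Z_span_Q: "Z_span es \<subseteq> Q_span es"
  unfolding Z_span_def Q_span_def by (auto simp: Z_comb_Q)

lemma Z_indep_Q_indep: assumes "Z_indep es" shows "Q_indep es"
  unfolding Q_indep_def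
proof (rule allI, rule impI)
  fix c assume c: "Q_comb es c = 0"
  define D where "D = (\<Prod>k<length es. snd (quotient_of (c k)))"
  have Dpos: "D > 0" unfolding D_def by (intro prod_pos) (simp add: quotient_of_denom_pos')
  have int: "of_int D * c k \<in> \<int>" if "k < length es" for k
  proof -
    obtain a b where ab: "quotient_of (c k) = (a, b)" by (cases "quotient_of (c k)")
    then have ck: "c k = of_int a / of_int b" by (simp add: quotient_of_div)
    have "b dvd D" unfolding D_def using that ab
      by (metis dvd_prod_eqI finite_lessThan lessThan_iff snd_conv)
    then obtain e where "D = b * e" by blast
    moreover have "b > 0" using ab quotient_of_denom_pos by blast
    ultimately have "of_int D * c k = of_int (a * e)" using ck by simp
    then show ?thesis by simp
  qed
  define z where "z k = (if k < length es then (THE i. of_int i = of_int D * c k) else 0)" for k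
  have z: "of_int (z k) = of_int D * c k" if kk: "k < length es" for k
  proof -
    obtain i where "of_int D * c k = of_int i" using int[OF kk] by (auto elim: Ints_cases)
    then show ?thesis unfolding z_def using kk by simp
  qed
  have "Z_comb es z = Q_comb es (\<lambda>k. of_int D * c k)"
    unfolding Z_comb_Q by (rule Q_comb_cong) (simp add: z)
  also have "\<dots> = 0" by (simp add: Q_comb_scale c)
  finally have "\<forall>k<length es. z k = 0" using assms unfolding Z_indep_def by blast
  then show "\<forall>k<length es. c k = 0" using z Dpos by force
qed

lemma coord_Z_span: "Q_indep es \<Longrightarrow> x \<in> Z_span es \<Longrightarrow> coord es x k \<in> \<int>"
  unfolding Z_span_def by (auto simp: Z_comb_Q coord_eq)

lemma Z_span_coord: "Q_indep es \<Longrightarrow> x \<in> Q_span es \<Longrightarrow> (\<And>k. k < length es \<Longrightarrow> coord es x k \<in> \<int>) \<Longrightarrow> x \<in> Z_span es"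
proof -
  assume ind: "Q_indep es" and x: "x \<in> Q_span es" and I: "\<And>k. k < length es \<Longrightarrow> coord es x k \<in> \<int>"
  define z where "z k = (THE i. of_int i = coord es x k)" for k
  have "Z_comb es z = Q_comb es (coord es x)"
    unfolding Z_comb_Q
  proof (rule Q_comb_cong)
    fix k assume "k < length es"
    then obtain i where "coord es x k = of_int i" using I by (auto elim: Ints_cases)
    then show "of_int (z k) = coord es x k" unfolding z_def by simp
  qed
  also have "\<dots> = x" using Q_comb_coord[OF ind x] .
  finally show ?thesis unfolding Z_span_def by (metis rangeI)
qed

lemma Z_span_add: "x \<in> Z_span es \<Longrightarrow> y \<in> Z_span es \<Longrightarrow> x + y \<in> Z_span es"
proof -
  assume "x \<in> Z_span es" "y \<in> Z_span es"
  then obtain a b where "x = Z_comb es a" "y = Z_comb es b" unfolding Z_span_def by auto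
  then have "x + y = Z_comb es (\<lambda>k. a k + b k)" unfolding Z_comb_def by (simp add: distrib_right sum.distrib)
  then show ?thesis unfolding Z_span_def by simp
qed

lemma Z_span_int_mult: "x \<in> Z_span es \<Longrightarrow> of_int n * x \<in> Z_span es"
proof -
  assume "x \<in> Z_span es"
  then obtain a where "x = Z_comb es a" unfolding Z_span_def by auto
  then have "of_int n * x = Z_comb es (\<lambda>k. n * a k)" unfolding Z_comb_def by (simp add: sum_distrib_left mult.assoc)
  then show ?thesis unfolding Z_span_def by simp
qed

lemma Z_span_0: "0 \<in> Z_span es"
proof -
  have "Z_comb es (\<lambda>_. 0) = 0" unfolding Z_comb_def by simp
  then show ?thesis unfolding Z_span_def by (metis rangeI)
qed

lemma Z_span_diff: "x \<in> Z_span es \<Longrightarrow> y \<in> Z_span es \<Longrightarrow> x - y \<in> Z_span es"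
  using Z_span_add[of x es "of_int (-1) * y"] Z_span_int_mult[of y es "-1"] by simp

lemma Z_span_sum: "(\<And>i. i \<in> A \<Longrightarrow> f i \<in> Z_span es) \<Longrightarrow> sum f A \<in> Z_span es"
  by (induct A rule: infinite_finite_induct) (auto intro: Z_span_add Z_span_0)

lemma Z_span_basis: "j < length es \<Longrightarrow> es ! j \<in> Z_span es"
proof -
  assume j: "j < length es"
  have "Z_comb es (\<lambda>k. if k = j then 1 else 0) = Q_comb es (\<lambda>k. if k = j then 1 else 0)"
    unfolding Z_comb_Q by (rule Q_comb_cong) simp
  also have "\<dots> = es ! j" using Q_comb_delta[OF j] .
  finally show ?thesis unfolding Z_span_def by (metis rangeI)
qed

lemma vs_q: "vector_space (\<lambda>q (x::complex). of_rat q * x)"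
  unfolding vector_space_def by (auto simp: algebra_simps of_rat_add of_rat_mult)

lemma mod_q: "Modules.module (\<lambda>q (x::complex). of_rat q * x)"
  using vs_q by (simp add: Vector_Spaces.module_iff_vector_space)

lemma Q_indep_distinct: assumes ind: "Q_indep es" shows "distinct es"
proof (rule ccontr)
  assume "\<not> distinct es"
  then obtain i j where ij: "i < length es" "j < length es" "i \<noteq> j" "es ! i = es ! j"
    by (auto simp: distinct_conv_nth)
  define c where "c k = (if k = i then 1 else 0) - (if k = j then 1 else (0::rat))" for k
  have "Q_comb es c = es ! i - es ! j"
    unfolding c_def using Q_comb_diff[of es "\<lambda>k. if k = i then 1 else 0" "\<lambda>k. if k = j then 1 else 0"]
      Q_comb_delta[OF ij(1)] Q_comb_delta[OF ij(2)] by simp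
  then have "Q_comb es c = 0" using ij by simp
  then have "c i = 0" using ind ij unfolding Q_indep_def by blast
  then show False using ij unfolding c_def by simp
qed

lemma set_nth_image: "set es = (\<lambda>k. es ! k) ` {..<length es}"
  by (auto simp: set_conv_nth)

lemma sum_set_distinct: "distinct es \<Longrightarrow> (\<Sum>v\<in>set es. f v) = (\<Sum>k<length es. f (es ! k))"
  by (subst set_nth_image, subst sum.reindex) (auto intro: inj_on_nth)

lemma span_set_eq: assumes d: "distinct es"
  shows "Modules.module.span (\<lambda>q (x::complex). of_rat q * x) (set es) = Q_span es"
proof -
  have "Modules.module.span (\<lambda>q (x::complex). of_rat q * x) (set es)
      = range (\<lambda>u. \<Sum>v\<in>set es. of_rat (u v) * v)"
    using Modules.module.span_finite[OF mod_q, of "set es"] by simp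
  also have "\<dots> = Q_span es"
  proof
    show "range (\<lambda>u. \<Sum>v\<in>set es. of_rat (u v) * v) \<subseteq> Q_span es"
    proof
      fix x assume "x \<in> range (\<lambda>u. \<Sum>v\<in>set es. of_rat (u v) * v)"
      then obtain u where "x = (\<Sum>v\<in>set es. of_rat (u v) * v)" by auto
      then have "x = Q_comb es (\<lambda>k. u (es ! k))" unfolding Q_comb_def using sum_set_distinct[OF d] by simp
      then show "x \<in> Q_span es" unfolding Q_span_def by simp
    qed
  next
    show "Q_span es \<subseteq> range (\<lambda>u. \<Sum>v\<in>set es. of_rat (u v) * v)"
    proof
      fix x assume "x \<in> Q_span es"
      then obtain c where x: "x = Q_comb es c" unfolding Q_span_def by auto
      define u where "u v = c (THE k. k < length es \<and> es ! k = v)" for v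
      have u: "u (es ! k) = c k" if "k < length es" for k
      proof -
        have "(THE i. i < length es \<and> es ! i = es ! k) = k"
          using that d by (auto simp: nth_eq_iff_index_eq)
        then show ?thesis unfolding u_def by simp
      qed
      have "x = (\<Sum>v\<in>set es. of_rat (u v) * v)"
        unfolding x Q_comb_def sum_set_distinct[OF d] using u by simp
      then show "x \<in> range (\<lambda>u. \<Sum>v\<in>set es. of_rat (u v) * v)" by auto
    qed
  qed
  finally show ?thesis .
qed

lemma indep_set: assumes ind: "Q_indep es"
  shows "\<not> Modules.module.dependent (\<lambda>q (x::complex). of_rat q * x) (set es)"
proof
  have d: "distinct es" using Q_indep_distinct[OF ind] .
  assume "Modules.module.dependent (\<lambda>q (x::complex). of_rat q * x) (set es)"
  then obtain u where u: "\<exists>v\<in>set es. u v \<noteq> 0" "(\<Sum>v\<in>set es. of_rat (u v) * v) = 0"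
    using Modules.module.dependent_finite[OF mod_q, of "set es"] by auto
  have "Q_comb es (\<lambda>k. u (es ! k)) = 0" using u(2) unfolding Q_comb_def sum_set_distinct[OF d] .
  then have "\<forall>k<length es. u (es ! k) = 0" using ind unfolding Q_indep_def by blast
  then show False using u(1) by (auto simp: set_conv_nth)
qed

lemma Q_span_full:
  assumes nf: "number_field_of_degree K d" and len: "length es = d" and sub: "set es \<subseteq> K"
    and ind: "Q_indep es"
  shows "Q_span es = K"
proof
  have sf: "is_subfield K" using nf unfolding number_field_of_degree_def by simp
  show "Q_span es \<subseteq> K" unfolding Q_span_def using Q_comb_in[OF sf sub] by auto
  obtain bs where bs: "length bs = d" "set bs \<subseteq> K" "Q_indep bs" "Q_span bs = K"
    using nf unfolding number_field_of_degree_def by blast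
  show "K \<subseteq> Q_span es"
  proof
    fix x assume xK: "x \<in> K"
    show "x \<in> Q_span es"
    proof (rule ccontr)
      assume nx: "x \<notin> Q_span es"
      let ?sp = "Modules.module.span (\<lambda>q (x::complex). of_rat q * x)"
      let ?dep = "Modules.module.dependent (\<lambda>q (x::complex). of_rat q * x)"
      have de: "distinct es" using Q_indep_distinct[OF ind] .
      have db: "distinct bs" using Q_indep_distinct[OF bs(3)] .
      have "x \<notin> ?sp (set es)" using nx span_set_eq[OF de] by simp
      then have "\<not> ?dep (insert x (set es))"
        using vector_space.independent_insertI[OF vs_q] indep_set[OF ind] by blast
      moreover have "insert x (set es) \<subseteq> ?sp (set bs)"
        using span_set_eq[OF db] bs(4) xK sub by auto
      ultimately have "card (insert x (set es)) \<le> card (set bs)"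
        using vector_space.independent_span_bound[OF vs_q, of "set bs" "insert x (set es)"] by auto
      moreover have "x \<notin> set es" using nx Q_span_def
        by (metis Q_comb_delta in_set_conv_nth rangeI)
      ultimately show False using de db bs(1) len by (simp add: distinct_card)
    qed
  qed
qed

section \<open>Embeddings\<close>

context
  fixes K :: "complex set" and \<sigma> :: "complex \<Rightarrow> complex"
  assumes sf: "is_subfield K" and emb: "is_embedding K \<sigma>"
begin

lemma emb_add: "x \<in> K \<Longrightarrow> y \<in> K \<Longrightarrow> \<sigma> (x + y) = \<sigma> x + \<sigma> y"
  and emb_mult: "x \<in> K \<Longrightarrow> y \<in> K \<Longrightarrow> \<sigma> (x * y) = \<sigma> x * \<sigma> y"
  and emb_1: "\<sigma> 1 = 1"
  using emb unfolding is_embedding_def by auto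

lemma emb_0: "\<sigma> 0 = 0"
  using emb_add[OF sf_0[OF sf] sf_0[OF sf]] by simp

lemma emb_uminus: "x \<in> K \<Longrightarrow> \<sigma> (- x) = - \<sigma> x"
  using emb_add[of x "-x"] sf_uminus[OF sf, of x] emb_0 by (simp add: eq_neg_iff_add_eq_0 add.commute)

lemma emb_diff: "x \<in> K \<Longrightarrow> y \<in> K \<Longrightarrow> \<sigma> (x - y) = \<sigma> x - \<sigma> y"
  using emb_add[of x "-y"] emb_uminus[of y] sf_uminus[OF sf, of y] by simp

lemma emb_of_nat: "\<sigma> (of_nat n) = of_nat n"
proof (induct n)
  case 0 then show ?case using emb_0 by simp
next
  case (Suc n)
  have "\<sigma> (of_nat (Suc n)) = \<sigma> (1 + of_nat n)" by simp
  also have "\<dots> = 1 + of_nat n" using emb_add[OF sf_1[OF sf] sf_of_nat[OF sf]] emb_1 Suc by simp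
  finally show ?case by simp
qed

lemma emb_of_int: "\<sigma> (of_int k) = of_int k"
proof (cases "k \<ge> 0")
  case True
  then show ?thesis using emb_of_nat[of "nat k"] by simp
next
  case False
  then have "of_int k = - (of_nat (nat (-k)) :: complex)" by simp
  then show ?thesis using emb_uminus[OF sf_of_nat[OF sf, of "nat (-k)"]] emb_of_nat[of "nat (-k)"] False by simp
qed

lemma emb_of_rat: "\<sigma> (of_rat q) = of_rat q"
proof -
  obtain a b where ab: "quotient_of q = (a, b)" by (cases "quotient_of q")
  then have q: "q = of_int a / of_int b" and b: "b > 0" by (auto simp: quotient_of_div quotient_of_denom_pos)
  have "(of_int b :: complex) * of_rat q = of_int a" using q b by (simp add: of_rat_divide)
  then have "\<sigma> (of_int b * of_rat q) = of_int a" using emb_of_int by simp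
  then have "of_int b * \<sigma> (of_rat q) = of_int a"
    using emb_mult[OF sf_of_int[OF sf] sf_of_rat[OF sf]] emb_of_int by simp
  then have "\<sigma> (of_rat q) = of_int a / of_int b" using b by (simp add: field_simps)
  then show ?thesis using q by (simp add: of_rat_divide)
qed

lemma emb_scale: "x \<in> K \<Longrightarrow> \<sigma> (of_rat q * x) = of_rat q * \<sigma> x"
  using emb_mult[OF sf_of_rat[OF sf]] emb_of_rat by simp

lemma emb_sum: "(\<And>i. i \<in> A \<Longrightarrow> f i \<in> K) \<Longrightarrow> \<sigma> (sum f A) = (\<Sum>i\<in>A. \<sigma> (f i))"
proof (induct A rule: infinite_finite_induct)
  case (infinite A) then show ?case using emb_0 by simp
next
  case empty then show ?case using emb_0 by simp
next
  case (insert a A)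
  then show ?case using emb_add[of "f a" "sum f A"] sf_sum[OF sf, of A f] by simp
qed

lemma emb_Q_comb: "set es \<subseteq> K \<Longrightarrow> \<sigma> (Q_comb es c) = (\<Sum>k<length es. of_rat (c k) * \<sigma> (es ! k))"
proof -
  assume es: "set es \<subseteq> K"
  then have e: "es ! k \<in> K" if "k < length es" for k using that nth_mem by blast
  show ?thesis unfolding Q_comb_def
    by (subst emb_sum) (auto intro!: sf_mult[OF sf] sf_of_rat[OF sf] e sum.cong simp: emb_scale e)
qed

lemma emb_nonzero: "x \<in> K \<Longrightarrow> x \<noteq> 0 \<Longrightarrow> \<sigma> x \<noteq> 0"
proof
  assume x: "x \<in> K" "x \<noteq> 0" and s: "\<sigma> x = 0"
  have "\<sigma> (x * inverse x) = \<sigma> x * \<sigma> (inverse x)" using emb_mult[OF x(1) sf_inverse[OF sf x(1)]] .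
  then show False using x s emb_1 by simp
qed

end

lemma sum_list_map2_mult: "length xs = length ys \<Longrightarrow>
  r * sum_list (map2 (*) xs ys) = sum_list (map2 (*) (map ((*) r) xs) (ys :: complex list))"
  by (induct xs ys rule: list_induct2) (auto simp: algebra_simps)

lemma set_mult_module:
  assumes I: "is_ideal OK I" and r: "r \<in> OK" and x: "x \<in> set_mult I J"
  shows "r * x \<in> set_mult I J"
proof -
  obtain xs ys where xy: "x = sum_list (map2 (*) xs ys)" "length xs = length ys" "set xs \<subseteq> I" "set ys \<subseteq> J"
    using x unfolding set_mult_def by blast
  have "set (map ((*) r) xs) \<subseteq> I" using xy(3) I r unfolding is_ideal_def by auto
  then show ?thesis unfolding set_mult_def using sum_list_map2_mult[OF xy(2), of r] xy by force
qed

lemma sum_list_in_sf: "is_subfield K \<Longrightarrow> set xs \<subseteq> K \<Longrightarrow> sum_list xs \<in> K"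
  by (induct xs) (auto intro: sf_add sf_0)

lemma set_mult_sub:
  assumes sf: "is_subfield K" and I: "I \<subseteq> K" and J: "J \<subseteq> K"
  shows "set_mult I J \<subseteq> K"
proof
  fix x assume "x \<in> set_mult I J"
  then obtain xs ys where xy: "x = sum_list (map2 (*) xs ys)" "length xs = length ys" "set xs \<subseteq> I" "set ys \<subseteq> J"
    unfolding set_mult_def by blast
  have "set (map2 (*) xs ys) \<subseteq> K"
  proof
    fix z assume "z \<in> set (map2 (*) xs ys)"
    then obtain a b where ab: "(a, b) \<in> set (zip xs ys)" "z = a * b" by auto
    then have "a \<in> K" "b \<in> K" using set_zip_leftD[OF ab(1)] set_zip_rightD[OF ab(1)] xy(3,4) I J by auto
    then show "z \<in> K" using ab(2) sf_mult[OF sf] by simp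
  qed
  then show "x \<in> K" using xy(1) sum_list_in_sf[OF sf] by simp
qed

section \<open>Index of sublattices\<close>

definition cm :: "complex list \<Rightarrow> complex list \<Rightarrow> rat mat" where
  "cm es gs = mat (length es) (length es) (\<lambda>(j, i). coord es (gs ! j) i)"

definition ic :: "complex list \<Rightarrow> complex \<Rightarrow> nat \<Rightarrow> int" where
  "ic es x i = \<lfloor>coord es x i\<rfloor>"

definition cosets :: "complex set \<Rightarrow> complex set \<Rightarrow> complex set set" where
  "cosets S I = (\<lambda>x. {y \<in> S. y - x \<in> I}) ` S"

lemma ideal_index_cosets: "ideal_index OK I = card (cosets OK I)"
  unfolding ideal_index_def cosets_def ..

lemma of_int_complex_rat: "(of_int a :: complex) = of_rat (of_int a)"
  by simp

context
  fixes es :: "complex list"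
  assumes zind: "Z_indep es"
begin

lemma qind: "Q_indep es" using Z_indep_Q_indep[OF zind] .

lemma ic_eq: "x \<in> Z_span es \<Longrightarrow> of_int (ic es x i) = coord es x i"
proof -
  assume "x \<in> Z_span es"
  then have "coord es x i \<in> \<int>" using coord_Z_span[OF qind] by blast
  then obtain n where "coord es x i = of_int n" by (auto elim: Ints_cases)
  then show ?thesis unfolding ic_def by simp
qed

lemma ZS_QS: "x \<in> Z_span es \<Longrightarrow> x \<in> Q_span es"
  using Z_span_Q by blast

lemma coord_int_mult: "x \<in> Q_span es \<Longrightarrow> coord es (of_int a * x) i = of_int a * coord es x i"
  using coord_scale[OF qind, of x "of_int a" i] by simp

lemma ic_add_mult: assumes "x \<in> Z_span es" "y \<in> Z_span es"
  shows "ic es (x + of_int a * y) i = ic es x i + a * ic es y i"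
proof -
  have y2: "of_int a * y \<in> Z_span es" using Z_span_int_mult assms(2) by blast
  have "of_int (ic es (x + of_int a * y) i) = coord es (x + of_int a * y) i"
    using ic_eq Z_span_add[OF assms(1) y2] by blast
  also have "\<dots> = coord es x i + of_int a * coord es y i"
    using coord_add[OF qind ZS_QS[OF assms(1)] ZS_QS[OF y2]] coord_int_mult[OF ZS_QS[OF assms(2)]] by simp
  also have "\<dots> = of_int (ic es x i + a * ic es y i)" using ic_eq assms by simp
  finally show ?thesis by (simp only: of_int_eq_iff)
qed

lemma ic_diff_mult: assumes "x \<in> Z_span es" "y \<in> Z_span es"
  shows "ic es (x - of_int a * y) i = ic es x i - a * ic es y i"
  using ic_add_mult[OF assms, of "-a" i] by simp

lemma coord_Z_comb: "i < length es \<Longrightarrow> coord es (Z_comb es x) i = of_int (x i)"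
  unfolding Z_comb_Q using coord_Q_comb[OF qind] by simp

lemma Z_comb_in: "Z_comb es x \<in> Z_span es"
  unfolding Z_span_def by simp

lemma Z_comb_ic: "y \<in> Z_span es \<Longrightarrow> Z_comb es (ic es y) = y"
  unfolding Z_comb_Q using Q_comb_coord[OF qind ZS_QS] ic_eq by simp

lemma Z_comb_gs_coord:
  assumes gs: "set gs \<subseteq> Z_span es"
  shows "coord es (Z_comb gs z) i = (\<Sum>j<length gs. of_int (z j) * coord es (gs ! j) i)"
proof -
  have g: "gs ! j \<in> Q_span es" if "j < length gs" for j using gs that nth_mem ZS_QS by blast
  have "coord es (Z_comb gs z) i = (\<Sum>j<length gs. coord es (of_int (z j) * gs ! j) i)"
    unfolding Z_comb_def
    by (rule coord_sum[OF qind]) (auto intro!: Q_span_scale[of _ _ "of_int _", simplified] g)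
  also have "\<dots> = (\<Sum>j<length gs. of_int (z j) * coord es (gs ! j) i)"
    by (rule sum.cong) (auto simp: coord_int_mult g)
  finally show ?thesis .
qed

lemma Z_span_mono: "set gs' \<subseteq> Z_span gs \<Longrightarrow> Z_span gs' \<subseteq> Z_span gs"
proof
  fix x assume s: "set gs' \<subseteq> Z_span gs" and "x \<in> Z_span gs'"
  then obtain z where x: "x = Z_comb gs' z" unfolding Z_span_def by auto
  show "x \<in> Z_span gs" unfolding x Z_comb_def
    by (rule Z_span_sum) (use s nth_mem in \<open>auto intro!: Z_span_int_mult\<close>)
qed

section \<open>Triangular case\<close>

lemma cosets_rep:
  assumes R: "R \<subseteq> S" and I0: "0 \<in> I" and Iadd: "\<And>x y. x \<in> I \<Longrightarrow> y \<in> I \<Longrightarrow> x - y \<in> I"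
    and ex: "\<And>y. y \<in> S \<Longrightarrow> \<exists>\<rho>\<in>R. y - \<rho> \<in> I"
    and un: "\<And>\<rho> \<rho>'. \<rho> \<in> R \<Longrightarrow> \<rho>' \<in> R \<Longrightarrow> \<rho> - \<rho>' \<in> I \<Longrightarrow> \<rho> = \<rho>'"
  shows "card (cosets S I) = card (R :: complex set)"
proof -
  let ?f = "\<lambda>x. {y \<in> S. y - x \<in> I}"
  have Iminus: "x \<in> I \<Longrightarrow> - x \<in> I" for x using Iadd[OF I0, of x] by simp
  have Iplus: "x \<in> I \<Longrightarrow> y \<in> I \<Longrightarrow> x + y \<in> I" for x y using Iadd[OF _ Iminus[of y], of x] by simp
  have fe: "?f x = ?f \<rho>" if "x - \<rho> \<in> I" for x \<rho>
  proof -
    have "y - x \<in> I \<longleftrightarrow> y - \<rho> \<in> I" for y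
    proof
      assume "y - x \<in> I"
      then have "(y - x) + (x - \<rho>) \<in> I" using Iplus[OF _ that] by blast
      then show "y - \<rho> \<in> I" by simp
    next
      assume "y - \<rho> \<in> I"
      then have "(y - \<rho>) - (x - \<rho>) \<in> I" using Iadd[OF _ that] by blast
      then show "y - x \<in> I" by simp
    qed
    then show ?thesis by auto
  qed
  have "?f ` S = ?f ` R"
  proof
    show "?f ` S \<subseteq> ?f ` R"
    proof
      fix X assume "X \<in> ?f ` S"
      then obtain x where x: "x \<in> S" "X = ?f x" by blast
      obtain \<rho> where r: "\<rho> \<in> R" "x - \<rho> \<in> I" using ex[OF x(1)] by blast
      have "X = ?f \<rho>" using fe[OF r(2)] x(2) by simp
      then show "X \<in> ?f ` R" using r(1) by (rule image_eqI)
    qed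
    show "?f ` R \<subseteq> ?f ` S" using R by (rule image_mono)
  qed
  moreover have inj: "inj_on ?f R"
  proof (rule inj_onI)
    fix \<rho> \<rho>' assume r: "\<rho> \<in> R" "\<rho>' \<in> R" and e: "?f \<rho> = ?f \<rho>'"
    have "\<rho> \<in> ?f \<rho>" using r R I0 by auto
    then have "\<rho> - \<rho>' \<in> I" using e by auto
    then show "\<rho> = \<rho>'" using un r by blast
  qed
  ultimately have "card (?f ` S) = card R" using card_image[OF inj] by simp
  then show ?thesis unfolding cosets_def .
qed

lemma triangular_index:
  assumes len: "length gs = length es" and gs: "set gs \<subseteq> Z_span es"
    and tri: "\<And>j i. j < length es \<Longrightarrow> i < j \<Longrightarrow> coord es (gs ! j) i = 0"
    and nz: "\<And>i. i < length es \<Longrightarrow> coord es (gs ! i) i \<noteq> 0"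
  shows "of_nat (card (cosets (Z_span es) (Z_span gs))) = \<bar>det (cm es gs)\<bar>"
proof -
  let ?d = "length es"
  let ?S = "Z_span es"
  let ?I = "Z_span gs"
  define \<tau> where "\<tau> i = \<bar>ic es (gs ! i) i\<bar>" for i
  have gsi: "gs ! j \<in> ?S" if "j < ?d" for j
  proof -
    have "gs ! j \<in> set gs" using that len by simp
    then show ?thesis using gs by blast
  qed
  have zgs: "Z_comb gs z \<in> ?S" for z
  proof -
    have "Z_comb gs z \<in> ?I" unfolding Z_span_def by simp
    then show ?thesis using Z_span_mono[OF gs] by blast
  qed
  have T: "of_int (ic es (gs ! j) i) = coord es (gs ! j) i" if "j < ?d" for j i using ic_eq gsi that by blast
  have tri': "ic es (gs ! j) i = 0" if "j < ?d" "i < j" for j i using T[of j i] tri[OF that] that by simp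
  have taupos: "\<tau> i > 0" if "i < ?d" for i using T[of i i] nz[OF that] that unfolding \<tau>_def by auto
  define B where "B = (\<Pi>\<^sub>E i\<in>{..<?d}. {0..<\<tau> i})"
  define R where "R = Z_comb es ` B"
  have coordI: "coord es (Z_comb gs z) i = (\<Sum>j<?d. of_int (z j) * coord es (gs ! j) i)" for z i
    using Z_comb_gs_coord[OF gs] len by simp
  have icI: "ic es (Z_comb gs z) i = (\<Sum>j<?d. z j * ic es (gs ! j) i)" for z i
  proof -
    have "of_int (ic es (Z_comb gs z) i) = (\<Sum>j<?d. of_int (z j) * coord es (gs ! j) i)"
      using ic_eq[OF zgs] coordI by simp
    also have "\<dots> = of_int (\<Sum>j<?d. z j * ic es (gs ! j) i)" using T by simp
    finally show ?thesis by (simp only: of_int_eq_iff)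
  qed
  have I0: "0 \<in> ?I" using Z_span_0 .
  have ex: "\<exists>w\<in>?I. \<forall>i<k. 0 \<le> ic es (y - w) i \<and> ic es (y - w) i < \<tau> i" if y: "y \<in> ?S" and k: "k \<le> ?d" for y k
    using k
  proof (induct k)
    case 0 then show ?case using I0 by blast
  next
    case (Suc k)
    then obtain w where w: "w \<in> ?I" "\<forall>i<k. 0 \<le> ic es (y - w) i \<and> ic es (y - w) i < \<tau> i" by auto
    have kd: "k < ?d" using Suc by simp
    have wS: "w \<in> ?S" using w(1) Z_span_mono[OF gs] by blast
    have vS: "y - w \<in> ?S" using Z_span_diff[OF y wS] .
    define c where "c = ic es (y - w) k"
    define t where "t = ic es (gs ! k) k"
    define m where "m = (c div \<bar>t\<bar>) * sgn t"
    have gk: "gs ! k \<in> ?I" using Z_span_basis[of k gs] kd len by simp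
    have w'I: "w + of_int m * gs ! k \<in> ?I" using Z_span_add[OF w(1) Z_span_int_mult[OF gk]] .
    have eq: "y - (w + of_int m * gs ! k) = (y - w) - of_int m * gs ! k" by simp
    have icn: "ic es (y - (w + of_int m * gs ! k)) i = ic es (y - w) i - m * ic es (gs ! k) i" for i
      unfolding eq using ic_diff_mult[OF vS gsi[OF kd]] .
    have "t \<noteq> 0" using taupos[OF kd] unfolding \<tau>_def t_def by simp
    then have mt: "m * t = (c div \<bar>t\<bar>) * \<bar>t\<bar>" unfolding m_def by (simp add: abs_sgn mult.assoc)
    have "c - m * t = c mod \<bar>t\<bar>" using mt by (simp add: minus_div_mult_eq_mod)
    moreover have "0 \<le> c mod \<bar>t\<bar>" "c mod \<bar>t\<bar> < \<bar>t\<bar>" using \<open>t \<noteq> 0\<close> by auto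
    ultimately have kk: "0 \<le> c - m * t" "c - m * t < \<tau> k" unfolding \<tau>_def t_def by auto
    show ?case
    proof (rule bexI[OF _ w'I], intro allI impI)
      fix i assume "i < Suc k"
      then consider "i < k" | "i = k" by linarith
      then show "0 \<le> ic es (y - (w + of_int m * gs ! k)) i \<and> ic es (y - (w + of_int m * gs ! k)) i < \<tau> i"
      proof cases
        case 1 then show ?thesis using icn[of i] tri'[OF kd 1] w(2) by simp
      next
        case 2 then show ?thesis using icn[of i] kk unfolding c_def t_def by simp
      qed
    qed
  qed
  have exR: "\<exists>\<rho>\<in>R. y - \<rho> \<in> ?I" if y: "y \<in> ?S" for y
  proof -
    obtain w where w: "w \<in> ?I" "\<forall>i<?d. 0 \<le> ic es (y - w) i \<and> ic es (y - w) i < \<tau> i"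
      using ex[OF y order.refl] by blast
    have wS: "w \<in> ?S" using w(1) Z_span_mono[OF gs] by blast
    define x where "x = restrict (ic es (y - w)) {..<?d}"
    have xB: "x \<in> B" unfolding B_def x_def using w(2) by auto
    have "Z_comb es x = Z_comb es (ic es (y - w))"
      unfolding Z_comb_def x_def by simp
    also have "\<dots> = y - w" using Z_comb_ic Z_span_diff[OF y wS] by blast
    finally have "y - Z_comb es x = w" by simp
    moreover have "Z_comb es x \<in> R" unfolding R_def using xB by simp
    ultimately show ?thesis using w(1) by force
  qed
  have unB: "x = x'" if x: "x \<in> B" "x' \<in> B" and dI: "Z_comb es x - Z_comb es x' \<in> ?I" for x x'
  proof -
    obtain z where z: "Z_comb es x - Z_comb es x' = Z_comb gs z" using dI unfolding Z_span_def by auto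
    have ci: "x i - x' i = (\<Sum>j<?d. z j * ic es (gs ! j) i)" if i: "i < ?d" for i
    proof -
      have "of_int (x i - x' i) = coord es (Z_comb es x - Z_comb es x') i"
        using coord_diff[OF qind ZS_QS[OF Z_comb_in] ZS_QS[OF Z_comb_in]] coord_Z_comb[OF i] by simp
      also have "\<dots> = of_int (ic es (Z_comb gs z) i)"
        unfolding z using ic_eq[OF zgs] by simp
      finally show ?thesis using icI by (simp only: of_int_eq_iff)
    qed
    have main: "\<forall>i'<i. i' < ?d \<longrightarrow> z i' = 0 \<and> x i' = x' i'" for i
    proof (induct i)
      case 0 then show ?case by simp
    next
      case (Suc i)
      show ?case
      proof (intro allI impI)
        fix i' assume i': "i' < Suc i" "i' < ?d"
        show "z i' = 0 \<and> x i' = x' i'"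
        proof (cases "i' < i")
          case True then show ?thesis using Suc i' by blast
        next
          case False
          then have ii: "i' = i" using i' by simp
          have "(\<Sum>j<?d. z j * ic es (gs ! j) i) = (\<Sum>j<?d. if j = i then z i * ic es (gs ! i) i else 0)"
          proof (rule sum.cong[OF refl])
            fix j assume j: "j \<in> {..<?d}"
            consider "j < i" | "j = i" | "i < j" by linarith
            then show "z j * ic es (gs ! j) i = (if j = i then z i * ic es (gs ! i) i else 0)"
            proof cases
              case 1 then show ?thesis using Suc i' ii by auto
            next
              case 2 then show ?thesis by simp
            next
              case 3 then show ?thesis using tri' j by auto
            qed
          qed
          also have "\<dots> = z i * ic es (gs ! i) i" using i' ii by simp
          finally have e: "x i - x' i = z i * ic es (gs ! i) i" using ci i' ii by simp
          have bx: "0 \<le> x i" "x i < \<tau> i" "0 \<le> x' i" "x' i < \<tau> i"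
            using x i' ii unfolding B_def by (auto simp: PiE_iff)
          have lt: "\<bar>z i\<bar> * \<tau> i < \<tau> i"
            using e bx unfolding \<tau>_def by (simp add: abs_mult[symmetric])
          have tp: "\<tau> i > 0" using taupos i' ii by simp
          have "z i = 0"
          proof (rule ccontr)
            assume "z i \<noteq> 0"
            then have "1 \<le> \<bar>z i\<bar>" by simp
            then have "1 * \<tau> i \<le> \<bar>z i\<bar> * \<tau> i" using tp by (intro mult_right_mono) auto
            then show False using lt by simp
          qed
          then show ?thesis using e ii by simp
        qed
      qed
    qed
    have "\<forall>i<?d. x i = x' i" using main[of ?d] by blast
    then show ?thesis using x unfolding B_def by (intro PiE_ext) auto
  qed
  have un: "\<rho> = \<rho>'" if rr: "\<rho> \<in> R" "\<rho>' \<in> R" "\<rho> - \<rho>' \<in> ?I" for \<rho> \<rho>'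
  proof -
    obtain x x' where xx: "x \<in> B" "x' \<in> B" "\<rho> = Z_comb es x" "\<rho>' = Z_comb es x'"
      using rr(1,2) unfolding R_def by blast
    then have "x = x'" using unB[OF xx(1,2)] rr(3) by simp
    then show ?thesis using xx by simp
  qed
  have RS: "R \<subseteq> ?S" unfolding R_def using Z_comb_in by blast
  have c1: "card (cosets ?S ?I) = card R"
    by (rule cosets_rep[OF RS I0 Z_span_diff exR un]) auto
  have inj: "inj_on (Z_comb es) B"
  proof (rule inj_onI)
    fix x x' assume "x \<in> B" "x' \<in> B" "Z_comb es x = Z_comb es x'"
    then show "x = x'" using unB I0 by simp
  qed
  have c2: "card R = card B" unfolding R_def using card_image[OF inj] .
  have c3: "card B = (\<Prod>i<?d. nat (\<tau> i))" unfolding B_def by (simp add: card_PiE)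
  have ut: "upper_triangular (cm es gs)" unfolding upper_triangular_def cm_def using tri by simp
  have cmc: "cm es gs \<in> carrier_mat ?d ?d" unfolding cm_def by simp
  have "det (cm es gs) = (\<Prod>i = 0..<?d. cm es gs $$ (i, i))"
    using det_upper_triangular[OF ut cmc] prod_list_diag_prod[of "cm es gs"] cmc by simp
  also have "\<dots> = (\<Prod>i<?d. coord es (gs ! i) i)" unfolding cm_def by (intro prod.cong) auto
  finally have "\<bar>det (cm es gs)\<bar> = (\<Prod>i<?d. \<bar>coord es (gs ! i) i\<bar>)" by (simp add: abs_prod)
  also have "\<dots> = (\<Prod>i<?d. of_int (\<tau> i))" unfolding \<tau>_def using T by (intro prod.cong) auto
  also have "\<dots> = of_nat (\<Prod>i<?d. nat (\<tau> i))" unfolding of_nat_prod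
    by (intro prod.cong) (use taupos in \<open>auto simp: less_imp_le\<close>)
  finally show ?thesis using c1 c2 c3 by simp
qed

end

definition addop :: "nat \<Rightarrow> nat \<Rightarrow> int \<Rightarrow> complex list \<Rightarrow> complex list" where
  "addop k l a gs = gs[k := gs ! k + of_int a * gs ! l]"

definition swapop :: "nat \<Rightarrow> nat \<Rightarrow> complex list \<Rightarrow> complex list" where
  "swapop k l gs = gs[k := gs ! l, l := gs ! k]"

lemma Z_span_mono': "set gs' \<subseteq> Z_span gs \<Longrightarrow> Z_span gs' \<subseteq> Z_span gs"
proof
  fix x assume s: "set gs' \<subseteq> Z_span gs" and "x \<in> Z_span gs'"
  then obtain z where x: "x = Z_comb gs' z" unfolding Z_span_def by auto
  show "x \<in> Z_span gs" unfolding x Z_comb_def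
    by (rule Z_span_sum) (use s nth_mem in \<open>auto intro!: Z_span_int_mult\<close>)
qed

lemma set_sub_span: "set gs \<subseteq> Z_span gs"
  by (auto simp: in_set_conv_nth Z_span_basis)

lemma addop_length[simp]: "length (addop k l a gs) = length gs" unfolding addop_def by simp
lemma swapop_length[simp]: "length (swapop k l gs) = length gs" unfolding swapop_def by simp

lemma addop_nth: "k < length gs \<Longrightarrow> k \<noteq> l \<Longrightarrow> j < length gs \<Longrightarrow>
  addop k l a gs ! j = (if j = k then gs ! k + of_int a * gs ! l else gs ! j)"
  unfolding addop_def by simp

lemma swapop_nth: "k < length gs \<Longrightarrow> l < length gs \<Longrightarrow> j < length gs \<Longrightarrow>
  swapop k l gs ! j = (if j = k then gs ! l else if j = l then gs ! k else gs ! j)"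
  unfolding swapop_def by (auto simp: nth_list_update)

lemma addop_inv: "k < length gs \<Longrightarrow> l < length gs \<Longrightarrow> k \<noteq> l \<Longrightarrow> addop k l (-a) (addop k l a gs) = gs"
  by (rule nth_equalityI) (auto simp: addop_nth)

lemma swapop_inv: "k < length gs \<Longrightarrow> l < length gs \<Longrightarrow> swapop k l (swapop k l gs) = gs"
  by (rule nth_equalityI) (auto simp: swapop_nth)

lemma addop_sub: assumes "k < length gs" "l < length gs" "k \<noteq> l"
  shows "Z_span (addop k l a gs) \<subseteq> Z_span gs"
proof -
  have "set (addop k l a gs) \<subseteq> Z_span gs"
  proof
    fix x assume "x \<in> set (addop k l a gs)"
    then obtain j where j: "j < length gs" "x = addop k l a gs ! j" by (auto simp: in_set_conv_nth)
    show "x \<in> Z_span gs"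
    proof (cases "j = k")
      case True
      then show ?thesis using j assms
        by (simp add: addop_nth Z_span_add Z_span_int_mult Z_span_basis)
    next
      case False
      then show ?thesis using j assms by (simp add: addop_nth Z_span_basis)
    qed
  qed
  then show ?thesis by (rule Z_span_mono')
qed

lemma addop_span: assumes "k < length gs" "l < length gs" "k \<noteq> l"
  shows "Z_span (addop k l a gs) = Z_span gs"
  using addop_sub[OF assms, of a] addop_sub[of k "addop k l a gs" l "-a"] assms addop_inv[OF assms, of a]
  by auto

lemma swapop_sub: assumes "k < length gs" "l < length gs"
  shows "Z_span (swapop k l gs) \<subseteq> Z_span gs"
proof -
  have "set (swapop k l gs) \<subseteq> Z_span gs"
  proof
    fix x assume "x \<in> set (swapop k l gs)"
    then obtain j where j: "j < length gs" "x = swapop k l gs ! j" by (auto simp: in_set_conv_nth)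
    then show "x \<in> Z_span gs" using assms by (simp add: swapop_nth Z_span_basis)
  qed
  then show ?thesis by (rule Z_span_mono')
qed

lemma swapop_span: assumes "k < length gs" "l < length gs"
  shows "Z_span (swapop k l gs) = Z_span gs"
  using swapop_sub[OF assms] swapop_sub[of k "swapop k l gs" l] assms swapop_inv[OF assms]
  by auto

context
  fixes es :: "complex list"
  assumes zind: "Z_indep es"
begin

definition okl :: "complex list \<Rightarrow> bool" where
  "okl gs \<longleftrightarrow> length gs = length es \<and> set gs \<subseteq> Z_span es"

lemma okl_nth: "okl gs \<Longrightarrow> j < length es \<Longrightarrow> gs ! j \<in> Z_span es"
  unfolding okl_def by (metis nth_mem subsetD)

lemma addop_ok: assumes "okl gs" "k < length es" "l < length es" "k \<noteq> l"
  shows "okl (addop k l a gs)"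
  using assms addop_sub[of k gs l a] Z_span_mono'[of gs es] set_sub_span[of "addop k l a gs"] unfolding okl_def by auto

lemma swapop_ok: assumes "okl gs" "k < length es" "l < length es"
  shows "okl (swapop k l gs)"
  using assms swapop_sub[of k gs l] Z_span_mono'[of gs es] set_sub_span[of "swapop k l gs"] unfolding okl_def by auto

lemma addop_ic: assumes "okl gs" "k < length es" "l < length es" "k \<noteq> l" "j < length es"
  shows "ic es (addop k l a gs ! j) i = (if j = k then ic es (gs ! k) i + a * ic es (gs ! l) i else ic es (gs ! j) i)"
  using assms ic_add_mult[OF zind okl_nth[OF assms(1,2)] okl_nth[OF assms(1,3)]]
  by (simp add: addop_nth okl_def)

lemma swapop_ic: assumes "okl gs" "k < length es" "l < length es" "j < length es"
  shows "ic es (swapop k l gs ! j) i = (if j = k then ic es (gs ! l) i else if j = l then ic es (gs ! k) i else ic es (gs ! j) i)"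
  using assms by (simp add: swapop_nth okl_def)

lemma addop_det: assumes "okl gs" "k < length es" "l < length es" "k \<noteq> l"
  shows "det (cm es (addop k l a gs)) = det (cm es gs)"
proof -
  have "cm es (addop k l a gs) = addrow (of_int a) k l (cm es gs)"
  proof (rule eq_matI)
    fix i j assume ij: "i < dim_row (addrow (of_int a) k l (cm es gs))" "j < dim_col (addrow (of_int a) k l (cm es gs))"
    then have ij': "i < length es" "j < length es" unfolding cm_def by auto
    show "cm es (addop k l a gs) $$ (i, j) = addrow (of_int a) k l (cm es gs) $$ (i, j)"
    proof (cases "i = k")
      case True
      have "coord es (gs ! k + of_int a * gs ! l) j = coord es (gs ! k) j + of_int a * coord es (gs ! l) j"
        using coord_add[OF qind[OF zind] ZS_QS[OF zind okl_nth[OF assms(1,2)]]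
            Q_span_scale[OF ZS_QS[OF zind okl_nth[OF assms(1,3)]], of "of_int a"]]
          coord_int_mult[OF zind ZS_QS[OF zind okl_nth[OF assms(1,3)]]]
        by simp
      then show ?thesis using True ij' assms unfolding cm_def by (simp add: addop_nth okl_def)
    next
      case False
      then show ?thesis using ij' assms unfolding cm_def by (simp add: addop_nth okl_def)
    qed
  qed (auto simp: cm_def)
  then show ?thesis using det_addrow[OF assms(3,4), of "cm es gs" "of_int a"] by (simp add: cm_def)
qed

lemma swapop_det: assumes "okl gs" "k < length es" "l < length es" "k \<noteq> l"
  shows "det (cm es (swapop k l gs)) = - det (cm es gs)"
proof -
  have "cm es (swapop k l gs) = swaprows k l (cm es gs)"
    by (rule eq_matI) (use assms in \<open>auto simp: cm_def swapop_nth okl_def\<close>)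
  then show ?thesis using det_swaprows[OF assms(2,3,4), of "cm es gs"] by (simp add: cm_def)
qed

end

lemma sum_change1: assumes "finite A" "j \<in> A" "\<And>m. m \<in> A \<Longrightarrow> m \<noteq> j \<Longrightarrow> g m = f m"
  shows "sum g A = sum f A - f j + (g j :: int)"
proof -
  have "sum g A = g j + sum g (A - {j})" using sum.remove[OF assms(1,2)] .
  also have "sum g (A - {j}) = sum f (A - {j})" using assms(3) by (intro sum.cong) auto
  also have "sum f (A - {j}) = sum f A - f j" using sum.remove[OF assms(1,2), of f] by simp
  finally show ?thesis by simp
qed

lemma absred: "(a::int) \<noteq> 0 \<Longrightarrow> b \<noteq> 0 \<Longrightarrow> \<bar>b\<bar> \<le> \<bar>a\<bar> \<Longrightarrow> \<bar>a + - (sgn a * sgn b) * b\<bar> = \<bar>a\<bar> - \<bar>b\<bar>"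
  by (cases "a > 0"; cases "b > 0") (auto simp: sgn_if)

context
  fixes es :: "complex list"
  assumes zind: "Z_indep es"
begin

definition good :: "nat \<Rightarrow> complex list \<Rightarrow> bool" where
  "good k gs \<longleftrightarrow> (\<forall>i<k. \<forall>j<length es. i < j \<longrightarrow> ic es (gs ! j) i = 0)"

definition mu :: "nat \<Rightarrow> complex list \<Rightarrow> int" where
  "mu k gs = 2 * (\<Sum>m\<in>{k<..<length es}. \<bar>ic es (gs ! m) k\<bar>) + \<bar>ic es (gs ! k) k\<bar>
     + (if ic es (gs ! k) k = 0 then 1 else 0)"

lemma mu_nonneg: "0 \<le> mu k gs"
  unfolding mu_def by (auto intro!: sum_nonneg add_nonneg_nonneg)

lemma good_addop: assumes ok: "okl es gs" and g: "good k gs" and p: "k \<le> p" "p < length es"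
  and q: "k \<le> q" "q < length es" "p \<noteq> q"
  shows "good k (addop p q a gs)"
  unfolding good_def
proof (intro allI impI)
  fix i j assume ij: "i < k" "j < length es" "i < j"
  show "ic es (addop p q a gs ! j) i = 0"
    using addop_ic[OF zind ok p(2) q(2) q(3) ij(2), of a i] g ij p q unfolding good_def by auto
qed

lemma good_swapop: assumes ok: "okl es gs" and g: "good k gs" and p: "k \<le> p" "p < length es"
  and q: "k \<le> q" "q < length es"
  shows "good k (swapop p q gs)"
  unfolding good_def
proof (intro allI impI)
  fix i j assume ij: "i < k" "j < length es" "i < j"
  show "ic es (swapop p q gs ! j) i = 0"
    using swapop_ic[OF zind ok p(2) q(2) ij(2), of i] g ij p q unfolding good_def by auto
qed

lemma tri_step_aux:
  assumes k: "k < length es"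
  shows "\<forall>gs. nat (mu k gs) = n \<longrightarrow> okl es gs \<longrightarrow> good k gs \<longrightarrow>
    (\<exists>gs'. okl es gs' \<and> Z_span gs' = Z_span gs \<and> \<bar>det (cm es gs')\<bar> = \<bar>det (cm es gs)\<bar> \<and> good (Suc k) gs')"
proof (induct n rule: less_induct)
  case (less n)
  show ?case
  proof (intro allI impI)
    fix gs assume n: "nat (mu k gs) = n" and ok: "okl es gs" and g: "good k gs"
    let ?d = "length es"
    define c where "c m = ic es (gs ! m) k" for m
    have IH: "\<exists>gs'. okl es gs' \<and> Z_span gs' = Z_span gs1 \<and> \<bar>det (cm es gs')\<bar> = \<bar>det (cm es gs1)\<bar> \<and> good (Suc k) gs'"
      if "mu k gs1 < mu k gs" "okl es gs1" "good k gs1" for gs1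
      using less[of "nat (mu k gs1)"] that n mu_nonneg[of k gs1] by auto
    have lg: "length gs = ?d" using ok unfolding okl_def[OF zind] by simp
    show "\<exists>gs'. okl es gs' \<and> Z_span gs' = Z_span gs \<and> \<bar>det (cm es gs')\<bar> = \<bar>det (cm es gs)\<bar> \<and> good (Suc k) gs'"
    proof (cases "\<exists>j. k < j \<and> j < ?d \<and> c j \<noteq> 0")
      case False
      note False' = False
      have "good (Suc k) gs" unfolding good_def
      proof (intro allI impI)
        fix i j assume ij: "i < Suc k" "j < ?d" "i < j"
        show "ic es (gs ! j) i = 0"
        proof (cases "i < k")
          case True then show ?thesis using g ij unfolding good_def by blast
        next
          case False then have "i = k" using ij by simp
          then show ?thesis using False' ij unfolding c_def by blast
        qed
      qed
      then show ?thesis using ok by blast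
    next
      case True
      then obtain j where j: "k < j" "j < ?d" "c j \<noteq> 0" by blast
      have jk: "j \<noteq> k" using j by simp
      define S where "S gs' = (\<Sum>m\<in>{k<..<?d}. \<bar>ic es (gs' ! m) k\<bar>)" for gs'
      have muS: "mu k gs' = 2 * S gs' + \<bar>ic es (gs' ! k) k\<bar> + (if ic es (gs' ! k) k = 0 then 1 else 0)" for gs'
        unfolding mu_def S_def ..
      have jA: "j \<in> {k<..<?d}" using j by simp
      consider (b1) "c k = 0" | (b2) "c k \<noteq> 0" "\<bar>c k\<bar> \<le> \<bar>c j\<bar>" | (b3) "c k \<noteq> 0" "\<bar>c j\<bar> < \<bar>c k\<bar>" by linarith
      then show ?thesis
      proof cases
        case b1
        define gs1 where "gs1 = swapop k j gs"
        have ok1: "okl es gs1" unfolding gs1_def using swapop_ok[OF zind ok k j(2)] .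
        have g1: "good k gs1" unfolding gs1_def using good_swapop[OF ok g order.refl k _ j(2)] j by simp
        have c1: "ic es (gs1 ! m) k = (if m = k then c j else if m = j then c k else c m)" if "m < ?d" for m
          unfolding gs1_def c_def using swapop_ic[OF zind ok k j(2) that] by simp
        have "S gs1 = S gs - \<bar>ic es (gs ! j) k\<bar> + \<bar>ic es (gs1 ! j) k\<bar>" unfolding S_def
          by (rule sum_change1[OF _ jA]) (auto simp: c1 c_def)
        then have "S gs1 = S gs - \<bar>c j\<bar> + \<bar>c k\<bar>" using c1[OF j(2)] jk unfolding c_def by simp
        then have "mu k gs1 < mu k gs" using muS[of gs1] muS[of gs] c1[OF k] c1[OF j(2)] b1 j(3) jk
          unfolding c_def by auto
        then obtain gs' where gs': "okl es gs'" "Z_span gs' = Z_span gs1" "\<bar>det (cm es gs')\<bar> = \<bar>det (cm es gs1)\<bar>" "good (Suc k) gs'"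
          using IH[OF _ ok1 g1] by blast
        have "Z_span gs1 = Z_span gs" unfolding gs1_def using swapop_span[of k gs j] k j lg by simp
        moreover have "\<bar>det (cm es gs1)\<bar> = \<bar>det (cm es gs)\<bar>" unfolding gs1_def
          using swapop_det[OF zind ok k j(2)] jk by simp
        ultimately show ?thesis using gs' by metis
      next
        case b2
        define s where "s = sgn (c j) * sgn (c k)"
        define gs1 where "gs1 = addop j k (-s) gs"
        have ok1: "okl es gs1" unfolding gs1_def using addop_ok[OF zind ok j(2) k jk] .
        have g1: "good k gs1" unfolding gs1_def using good_addop[OF ok g _ j(2) order.refl k jk] j by simp
        have c1: "ic es (gs1 ! m) k = (if m = j then c j + (-s) * c k else c m)" if "m < ?d" for m
          unfolding gs1_def c_def using addop_ic[OF zind ok j(2) k jk that] by simp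
        have ab: "\<bar>c j + - s * c k\<bar> = \<bar>c j\<bar> - \<bar>c k\<bar>" unfolding s_def using absred j(3) b2 by blast
        have "S gs1 = S gs - \<bar>ic es (gs ! j) k\<bar> + \<bar>ic es (gs1 ! j) k\<bar>" unfolding S_def
          by (rule sum_change1[OF _ jA]) (auto simp: c1 c_def)
        then have "S gs1 = S gs - \<bar>c j\<bar> + (\<bar>c j\<bar> - \<bar>c k\<bar>)" using c1[OF j(2)] ab unfolding c_def by simp
        then have "mu k gs1 < mu k gs" using muS[of gs1] muS[of gs] c1[OF k] b2 jk
          unfolding c_def by auto
        then obtain gs' where gs': "okl es gs'" "Z_span gs' = Z_span gs1" "\<bar>det (cm es gs')\<bar> = \<bar>det (cm es gs1)\<bar>" "good (Suc k) gs'"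
          using IH[OF _ ok1 g1] by blast
        have "Z_span gs1 = Z_span gs" unfolding gs1_def using addop_span[of j gs k] k j lg jk by simp
        moreover have "\<bar>det (cm es gs1)\<bar> = \<bar>det (cm es gs)\<bar>" unfolding gs1_def
          using addop_det[OF zind ok j(2) k jk] by simp
        ultimately show ?thesis using gs' by metis
      next
        case b3
        define s where "s = sgn (c k) * sgn (c j)"
        define gs1 where "gs1 = addop k j (-s) gs"
        have ok1: "okl es gs1" unfolding gs1_def using addop_ok[OF zind ok k j(2)] jk by simp
        have g1: "good k gs1" unfolding gs1_def using good_addop[OF ok g order.refl k _ j(2)] j jk by simp
        have c1: "ic es (gs1 ! m) k = (if m = k then c k + (-s) * c j else c m)" if "m < ?d" for m
          unfolding gs1_def c_def using addop_ic[OF zind ok k j(2) _ that] jk by simp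
        have ab: "\<bar>c k + - s * c j\<bar> = \<bar>c k\<bar> - \<bar>c j\<bar>" unfolding s_def using absred j(3) b3 by simp
        have "S gs1 = S gs" unfolding S_def by (rule sum.cong) (auto simp: c1 c_def)
        then have "mu k gs1 < mu k gs" using muS[of gs1] muS[of gs] c1[OF k] b3 ab j(3)
          unfolding c_def by auto
        then obtain gs' where gs': "okl es gs'" "Z_span gs' = Z_span gs1" "\<bar>det (cm es gs')\<bar> = \<bar>det (cm es gs1)\<bar>" "good (Suc k) gs'"
          using IH[OF _ ok1 g1] by blast
        have "Z_span gs1 = Z_span gs" unfolding gs1_def using addop_span[of k gs j] k j lg jk by simp
        moreover have "\<bar>det (cm es gs1)\<bar> = \<bar>det (cm es gs)\<bar>" unfolding gs1_def
          using addop_det[OF zind ok k j(2)] jk by simp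
        ultimately show ?thesis using gs' by metis
      qed
    qed
  qed
qed

lemma tri_all: assumes ok: "okl es gs" shows "k \<le> length es \<Longrightarrow>
  \<exists>gs'. okl es gs' \<and> Z_span gs' = Z_span gs \<and> \<bar>det (cm es gs')\<bar> = \<bar>det (cm es gs)\<bar> \<and> good k gs'"
proof (induct k)
  case 0 then show ?case using ok unfolding good_def by blast
next
  case (Suc k)
  then obtain gs1 where gs1: "okl es gs1" "Z_span gs1 = Z_span gs" "\<bar>det (cm es gs1)\<bar> = \<bar>det (cm es gs)\<bar>" "good k gs1"
    by auto
  obtain gs' where "okl es gs'" "Z_span gs' = Z_span gs1" "\<bar>det (cm es gs')\<bar> = \<bar>det (cm es gs1)\<bar>" "good (Suc k) gs'"
    using tri_step_aux[of k "nat (mu k gs1)"] Suc(2) gs1(1,4) by auto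
  then show ?case using gs1 by metis
qed

theorem index_det:
  assumes ok: "okl es gs" and nz: "det (cm es gs) \<noteq> 0"
  shows "of_nat (card (cosets (Z_span es) (Z_span gs))) = \<bar>det (cm es gs)\<bar>"
proof -
  obtain gs' where gs': "okl es gs'" "Z_span gs' = Z_span gs" "\<bar>det (cm es gs')\<bar> = \<bar>det (cm es gs)\<bar>" "good (length es) gs'"
    using tri_all[OF ok order.refl] by blast
  have len: "length gs' = length es" and sub: "set gs' \<subseteq> Z_span es" using gs'(1) unfolding okl_def[OF zind] by auto
  have tri: "coord es (gs' ! j) i = 0" if "j < length es" "i < j" for j i
  proof -
    have "ic es (gs' ! j) i = 0" using gs'(4) that unfolding good_def by auto
    then show ?thesis using ic_eq[OF zind okl_nth[OF zind gs'(1) that(1)], of i] by simp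
  qed
  have ut: "upper_triangular (cm es gs')" unfolding upper_triangular_def cm_def using tri by simp
  have cmc: "cm es gs' \<in> carrier_mat (length es) (length es)" unfolding cm_def by simp
  have "det (cm es gs') = (\<Prod>i = 0..<length es. cm es gs' $$ (i, i))"
    using det_upper_triangular[OF ut cmc] prod_list_diag_prod[of "cm es gs'"] cmc by simp
  also have "\<dots> = (\<Prod>i = 0..<length es. coord es (gs' ! i) i)" unfolding cm_def by (intro prod.cong) auto
  finally have e1: "det (cm es gs') = (\<Prod>i = 0..<length es. coord es (gs' ! i) i)" .
  have pnz: "(\<Prod>i = 0..<length es. coord es (gs' ! i) i) \<noteq> 0"
  proof
    assume "(\<Prod>i = 0..<length es. coord es (gs' ! i) i) = 0"
    then have "det (cm es gs') = 0" by (simp only: e1)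
    then show False using gs'(3) nz by simp
  qed
  have diag: "coord es (gs' ! i) i \<noteq> 0" if ii: "i < length es" for i
  proof
    assume "coord es (gs' ! i) i = 0"
    then have "(\<Prod>i = 0..<length es. coord es (gs' ! i) i) = 0" using ii by (intro prod_zero) auto
    then show False using pnz by simp
  qed
  show ?thesis using triangular_index[OF zind len sub tri diag] gs'(2,3) by simp
qed

end

section \<open>Linear forms given by triangular bases\<close>

lemma lin_form_eq:
  assumes qi: "Q_indep es" and len: "length es = r + 2" and tri: "triangular_wrt es u r g" and u0: "u 0 = 1"
  shows "lam_wrt es u r g > 0" "lin_form es u r g (lam_wrt es u r g) x = coord es x (r + 1)"
proof -
  let ?d = "r + 2"
  define vl where "vl = map (\<lambda>j. u j * g) [0..<r+1] @ [x]"
  have g0: "es ! 0 = g" using tri unfolding triangular_wrt_def by simp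
  have tj: "coord es (u j * g) j > 0" "\<And>k. j < k \<Longrightarrow> coord es (u j * g) k = 0" if "j \<in> {1..r}" for j
    using tri that unfolding triangular_wrt_def by auto
  show lp: "lam_wrt es u r g > 0" unfolding lam_wrt_def using tj(1) by (intro prod_pos) auto
  have vs: "vl ! k = (if k \<le> r then u k * g else x)" if "k < ?d" for k
    using that unfolding vl_def by (auto simp: nth_append)
  have c0: "coord es g i = (if i = 0 then 1 else 0)" for i
    using coord_basis[OF qi, of 0 i] len g0 by simp
  define A where "A = mat ?d ?d (\<lambda>(i, k). coord es (vl ! k) i)"
  have Ac: "A \<in> carrier_mat ?d ?d" unfolding A_def by simp
  have ut: "upper_triangular A" unfolding upper_triangular_def
  proof (intro allI impI)
    fix i k assume i: "i < dim_row A" and k: "k < i"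
    then have i': "i < ?d" unfolding A_def by simp
    then have kr: "k \<le> r" using k by simp
    show "A $$ (i, k) = 0"
    proof (cases "k = 0")
      case True then show ?thesis unfolding A_def using i' k kr vs[of k] u0 c0 by simp
    next
      case False then show ?thesis unfolding A_def using i' k kr vs[of k] tj(2)[of k i] by simp
    qed
  qed
  have "det A = (\<Prod>i = 0..<?d. A $$ (i, i))"
    using det_upper_triangular[OF ut Ac] prod_list_diag_prod[of A] Ac by simp
  also have "\<dots> = (\<Prod>i = 0..<?d. if i = 0 then 1 else if i \<le> r then coord es (u i * g) i else coord es x i)"
    by (intro prod.cong) (auto simp: A_def vs u0 c0)
  also have "\<dots> = lam_wrt es u r g * coord es x (r + 1)"
  proof -
    have sp: "{0..<?d} = insert 0 (insert (r+1) {1..r})" by auto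
    have "(\<Prod>i = 0..<?d. if i = 0 then 1 else if i \<le> r then coord es (u i * g) i else coord es x i)
       = coord es x (r+1) * (\<Prod>i\<in>{1..r}. if i = 0 then 1 else if i \<le> r then coord es (u i * g) i else coord es x i)"
      unfolding sp by (subst prod.insert) auto
    also have "(\<Prod>i\<in>{1..r}. if i = 0 then 1 else if i \<le> r then coord es (u i * g) i else coord es x i)
        = lam_wrt es u r g" unfolding lam_wrt_def by (intro prod.cong) auto
    finally show ?thesis by simp
  qed
  finally have "det A = lam_wrt es u r g * coord es x (r + 1)" .
  moreover have "det_wrt es vl = det A" unfolding det_wrt_def A_def len vl_def by simp
  ultimately show "lin_form es u r g (lam_wrt es u r g) x = coord es x (r + 1)"
    unfolding lin_form_def using lp by (simp add: vl_def)
qed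

lemma coord_mult_change:
  assumes qA: "Q_indep eA" and qB: "Q_indep eB" and v: "v \<in> Q_span eB"
    and img: "\<And>l. l < length eB \<Longrightarrow> h * eB ! l \<in> Q_span eA"
  shows "coord eA (h * v) i = (\<Sum>l<length eB. coord eA (h * eB ! l) i * coord eB v l)"
proof -
  have "h * v = h * Q_comb eB (coord eB v)" using Q_comb_coord[OF qB v] by simp
  also have "\<dots> = (\<Sum>l<length eB. of_rat (coord eB v l) * (h * eB ! l))"
    unfolding Q_comb_def by (simp add: sum_distrib_left algebra_simps)
  finally have e: "h * v = (\<Sum>l<length eB. of_rat (coord eB v l) * (h * eB ! l))" .
  show ?thesis unfolding e
    by (subst coord_sum[OF qA]) (auto intro!: Q_span_scale img sum.cong simp: coord_scale[OF qA img])
qed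

lemma det_wrt_change:
  assumes qA: "Q_indep eA" and qB: "Q_indep eB" and len: "length eA = n" "length eB = n" "length vs = n"
    and vs: "set vs \<subseteq> Q_span eB"
    and img: "\<And>l. l < n \<Longrightarrow> h * eB ! l \<in> Q_span eA"
  shows "det_wrt eA (map ((*) h) vs) = det (mat n n (\<lambda>(i, l). coord eA (h * eB ! l) i)) * det_wrt eB vs"
proof -
  let ?M = "mat n n (\<lambda>(i, l). coord eA (h * eB ! l) i)"
  let ?C = "mat n n (\<lambda>(i, k). coord eB (vs ! k) i)"
  have "mat n n (\<lambda>(i, k). coord eA (map ((*) h) vs ! k) i) = ?M * ?C"
  proof (rule eq_matI)
    fix i k assume ik: "i < dim_row (?M * ?C)" "k < dim_col (?M * ?C)"
    then have ik': "i < n" "k < n" by auto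
    have vk: "vs ! k \<in> Q_span eB" using vs ik' len by (metis nth_mem subsetD)
    have "coord eA (h * vs ! k) i = (\<Sum>l<n. coord eA (h * eB ! l) i * coord eB (vs ! k) l)"
      using coord_mult_change[OF qA qB vk, of h i] img len by simp
    also have "\<dots> = (?M * ?C) $$ (i, k)" using ik' by (simp add: scalar_prod_def atLeast0LessThan)
    finally show "mat n n (\<lambda>(i, k). coord eA (map ((*) h) vs ! k) i) $$ (i, k) = (?M * ?C) $$ (i, k)"
      using ik' len by simp
  qed auto
  then show ?thesis unfolding det_wrt_def using len det_mult[of ?M n ?C] by simp
qed

lemma sigma_change:
  assumes sf: "is_subfield K" and embs: "\<And>j. j < n \<Longrightarrow> is_embedding K (\<sigma> j)"
    and qA: "Q_indep eA" and lenA: "length eA = n" and subA: "set eA \<subseteq> K"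
    and ys: "\<And>k. k < n \<Longrightarrow> ys k \<in> Q_span eA"
  shows "mat n n (\<lambda>(j, k). \<sigma> j (ys k)) =
     mat n n (\<lambda>(j, i). \<sigma> j (eA ! i)) * map_mat of_rat (mat n n (\<lambda>(i, k). coord eA (ys k) i))"
proof (rule eq_matI)
  fix j k assume jk: "j < dim_row (mat n n (\<lambda>(j, i). \<sigma> j (eA ! i)) * map_mat of_rat (mat n n (\<lambda>(i, k). coord eA (ys k) i)))"
    "k < dim_col (mat n n (\<lambda>(j, i). \<sigma> j (eA ! i)) * map_mat of_rat (mat n n (\<lambda>(i, k). coord eA (ys k) i)))"
  then have jk': "j < n" "k < n" by auto
  have "\<sigma> j (ys k) = \<sigma> j (Q_comb eA (coord eA (ys k)))" using Q_comb_coord[OF qA ys[OF jk'(2)]] by simp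
  also have "\<dots> = (\<Sum>i<n. of_rat (coord eA (ys k) i) * \<sigma> j (eA ! i))"
    using emb_Q_comb[OF sf embs[OF jk'(1)] subA] lenA by simp
  finally show "mat n n (\<lambda>(j, k). \<sigma> j (ys k)) $$ (j, k) =
     (mat n n (\<lambda>(j, i). \<sigma> j (eA ! i)) * map_mat of_rat (mat n n (\<lambda>(i, k). coord eA (ys k) i))) $$ (j, k)"
    using jk' by (simp add: scalar_prod_def atLeast0LessThan mult.commute)
qed auto

lemma det_sigma_change:
  assumes sf: "is_subfield K" and embs: "\<And>j. j < n \<Longrightarrow> is_embedding K (\<sigma> j)"
    and qA: "Q_indep eA" and lenA: "length eA = n" and subA: "set eA \<subseteq> K"
    and ys: "\<And>k. k < n \<Longrightarrow> ys k \<in> Q_span eA"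
  shows "det (mat n n (\<lambda>(j, k). \<sigma> j (ys k))) =
     det (mat n n (\<lambda>(j, i). \<sigma> j (eA ! i))) * of_rat (det (mat n n (\<lambda>(i, k). coord eA (ys k) i)))"
proof -
  let ?S = "mat n n (\<lambda>(j, i). \<sigma> j (eA ! i))"
  let ?C = "map_mat of_rat (mat n n (\<lambda>(i, k). coord eA (ys k) i))"
  have e: "mat n n (\<lambda>(j, k). \<sigma> j (ys k)) = ?S * ?C" using sigma_change[OF assms] .
  have "det (?S * ?C) = det ?S * det ?C" by (rule det_mult[of _ n]) auto
  then show ?thesis unfolding e by (simp add: of_rat_hom.hom_det)
qed

lemma det_diag: "det (mat n n (\<lambda>(i, j). if i = j then a i else 0)) = (\<Prod>i<n. (a i :: 'a :: comm_ring_1))"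
proof -
  have ut: "upper_triangular (mat n n (\<lambda>(i, j). if i = j then a i else 0))"
    unfolding upper_triangular_def by auto
  have "det (mat n n (\<lambda>(i, j). if i = j then a i else 0)) = (\<Prod>i = 0..<n. a i)"
    using det_upper_triangular[OF ut, of n] prod_list_diag_prod[of "mat n n (\<lambda>(i, j). if i = j then a i else 0)"]
    by simp
  then show ?thesis by (simp add: atLeast0LessThan)
qed

lemma diag_mult: "mat n n (\<lambda>(i, j). if i = j then a i else 0) * mat n n (\<lambda>(j, k). b j k) =
   mat n n (\<lambda>(j, k). a j * (b j k :: 'a :: comm_ring_1))"
proof (rule eq_matI)
  fix i j assume "i < dim_row (mat n n (\<lambda>(j, k). a j * b j k))" "j < dim_col (mat n n (\<lambda>(j, k). a j * b j k))"
  then have ij: "i < n" "j < n" by auto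
  have "(\<Sum>k = 0..<n. (if i = k then a i else 0) * b k j) = (\<Sum>k = 0..<n. if k = i then a i * b i j else 0)"
    by (intro sum.cong) auto
  also have "\<dots> = a i * b i j" using ij by simp
  finally show "(mat n n (\<lambda>(i, j). if i = j then a i else 0) * mat n n (\<lambda>(j, k). b j k)) $$ (i, j) =
      mat n n (\<lambda>(j, k). a j * b j k) $$ (i, j)" using ij by (simp add: scalar_prod_def)
qed auto

section \<open>Smith divisibility\<close>

definition int_mat :: "rat mat \<Rightarrow> bool" where
  "int_mat M \<longleftrightarrow> (\<forall>i<dim_row M. \<forall>j<dim_col M. M $$ (i, j) \<in> \<int>)"

lemma int_mat_floor: "int_mat M \<Longrightarrow> map_mat of_int (map_mat floor M) = M"
  unfolding int_mat_def by (intro eq_matI) (auto elim!: Ints_cases)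

lemma map_of_int_inj: "map_mat (of_int :: int \<Rightarrow> rat) X = map_mat of_int Y \<Longrightarrow> X = Y"
proof (rule eq_matI)
  assume e: "map_mat (of_int :: int \<Rightarrow> rat) X = map_mat of_int Y"
  have d: "dim_row X = dim_row Y" "dim_col X = dim_col Y" using arg_cong[OF e, of dim_row] arg_cong[OF e, of dim_col] by auto
  then show "dim_row X = dim_row Y" "dim_col X = dim_col Y" by auto
  fix i j assume "i < dim_row Y" "j < dim_col Y"
  then show "X $$ (i, j) = Y $$ (i, j)" using arg_cong[OF e, of "\<lambda>M. M $$ (i, j)"] d by simp
qed

lemma smith_dvd:
  assumes sm: "smith_elementary_divisors A n D" and n: "n > 0" and A: "A \<in> carrier_mat n n" and Ai: "int_mat A"
    and Y: "Y \<in> carrier_mat n n" and Yi: "int_mat Y" and AY: "A * Y = of_int m \<cdot>\<^sub>m 1\<^sub>m n"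
  shows "D (n - 1) dvd m"
proof -
  obtain P Q where P: "P \<in> carrier_mat n n" and Q: "Q \<in> carrier_mat n n"
    and PQi: "\<forall>i<n. \<forall>j<n. P $$ (i, j) \<in> \<int> \<and> Q $$ (i, j) \<in> \<int>"
    and dP: "det P \<in> {1, -1}" and dQ: "det Q \<in> {1, -1}"
    and PAQ: "P * A * Q = mat n n (\<lambda>(i, j). if i = j then of_int (D i) else 0)"
    using sm unfolding smith_elementary_divisors_def by blast
  define P' where "P' = map_mat floor P"
  define Q' where "Q' = map_mat floor Q"
  define A' where "A' = map_mat floor A"
  define Y' where "Y' = map_mat floor Y"
  define Dg where "Dg = mat n n (\<lambda>(i, j). if i = j then D i else (0::int))"
  have Pe: "P = map_mat of_int P'" unfolding P'_def using int_mat_floor[of P] PQi P unfolding int_mat_def by auto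
  have Qe: "Q = map_mat of_int Q'" unfolding Q'_def using int_mat_floor[of Q] PQi Q unfolding int_mat_def by auto
  have Ae: "A = map_mat of_int A'" unfolding A'_def using int_mat_floor[OF Ai] by simp
  have Ye: "Y = map_mat of_int Y'" unfolding Y'_def using int_mat_floor[OF Yi] by simp
  have P': "P' \<in> carrier_mat n n" and Q': "Q' \<in> carrier_mat n n" and A': "A' \<in> carrier_mat n n"
    and Y': "Y' \<in> carrier_mat n n" using P Q A Y unfolding P'_def Q'_def A'_def Y'_def by auto
  have "map_mat of_int (P' * A' * Q') = map_mat (of_int :: int \<Rightarrow> rat) Dg"
    using PAQ unfolding Pe Qe Ae Dg_def
    by (simp add: of_int_hom.mat_hom_mult[OF mult_carrier_mat[OF P' A'] Q'] of_int_hom.mat_hom_mult[OF P' A'])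
      (intro eq_matI, auto)
  then have PAQ': "P' * A' * Q' = Dg" by (rule map_of_int_inj)
  have "map_mat of_int (A' * Y') = map_mat (of_int :: int \<Rightarrow> rat) (m \<cdot>\<^sub>m 1\<^sub>m n)"
    using AY unfolding Ae Ye by (simp add: of_int_hom.mat_hom_mult[OF A' Y']) (intro eq_matI, auto)
  then have AY': "A' * Y' = m \<cdot>\<^sub>m 1\<^sub>m n" by (rule map_of_int_inj)
  have dP': "det P' \<in> {1, -1}" using dP unfolding Pe of_int_hom.hom_det by auto
  have dQ': "det Q' \<in> {1, -1}" using dQ unfolding Qe of_int_hom.hom_det by auto
  note aQ = adj_mat[OF Q'] and aP = adj_mat[OF P']
  define Z where "Z = adj_mat Q' * Y' * adj_mat P'"
  have Z: "Z \<in> carrier_mat n n" unfolding Z_def using aQ(1) aP(1) Y' by auto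
  have "Dg * Z = P' * A' * (Q' * adj_mat Q') * Y' * adj_mat P'"
    unfolding PAQ'[symmetric] Z_def using P' A' Q' Y' aQ(1) aP(1)
    by (simp add: assoc_mult_mat[of _ n n _ n _ n])
  also have "\<dots> = det Q' \<cdot>\<^sub>m (P' * (A' * Y') * adj_mat P')"
    unfolding aQ(2) using P' A' Y' aP(1)
    by (simp add: mult_smult_distrib[of _ n n _ n] mult_smult_assoc_mat[of _ n n _ n] assoc_mult_mat[of _ n n _ n _ n])
  also have "\<dots> = (det Q' * m) \<cdot>\<^sub>m (P' * adj_mat P')"
    unfolding AY' using P' aP(1)
    by (simp add: mult_smult_distrib[of _ n n _ n] mult_smult_assoc_mat[of _ n n _ n]) (intro eq_matI, auto)
  also have "\<dots> = (det Q' * m * det P') \<cdot>\<^sub>m 1\<^sub>m n"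
    unfolding aP(2) by (rule eq_matI) auto
  finally have DZ: "Dg * Z = (det Q' * m * det P') \<cdot>\<^sub>m 1\<^sub>m n" .
  have nn: "n - 1 < n" using n by simp
  have "(Dg * Z) $$ (n - 1, n - 1) = D (n - 1) * Z $$ (n - 1, n - 1)"
  proof -
    have "(Dg * Z) $$ (n - 1, n - 1) = (\<Sum>k = 0..<n. Dg $$ (n - 1, k) * Z $$ (k, n - 1))"
      using Z nn by (simp add: Dg_def scalar_prod_def)
    also have "\<dots> = (\<Sum>k = 0..<n. if k = n - 1 then D (n - 1) * Z $$ (n - 1, n - 1) else 0)"
      by (intro sum.cong) (auto simp: Dg_def nn)
    also have "\<dots> = D (n - 1) * Z $$ (n - 1, n - 1)" using nn by simp
    finally show ?thesis .
  qed
  then have "D (n - 1) * Z $$ (n - 1, n - 1) = det Q' * m * det P'" using DZ nn by simp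
  then have "D (n - 1) dvd det Q' * m * det P'" by (metis dvd_triv_left)
  then show ?thesis using dP' dQ' by auto
qed

lemma denom_dvd_Int: "snd (quotient_of q) dvd D \<Longrightarrow> of_int D * q \<in> \<int>"
proof -
  assume dv: "snd (quotient_of q) dvd D"
  obtain a b where ab: "quotient_of q = (a, b)" by (cases "quotient_of q")
  then have q: "q = of_int a / of_int b" and b: "b > 0" by (auto simp: quotient_of_div quotient_of_denom_pos)
  obtain e where "D = b * e" using dv ab by auto
  then have "of_int D * q = of_int (a * e)" using q b by simp
  then show ?thesis by simp
qed

lemma cr_rat: "complex_of_real (real_of_rat q) = complex_of_rat q"
proof -
  obtain a b where ab: "quotient_of q = (a, b)" by (cases "quotient_of q")
  then have q: "q = of_int a / of_int b" by (simp add: quotient_of_div)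
  show ?thesis unfolding q by (simp add: of_rat_divide)
qed

theorem lemma13:
  fixes K :: "complex set" and r :: nat and \<sigma> :: "nat \<Rightarrow> complex \<Rightarrow> complex"
    and ff bb aa :: "complex set" and q :: int and N :: nat and h h' :: complex and m :: int
    and u :: "nat \<Rightarrow> complex" and eL eK :: "complex list"
    and A At :: "nat \<Rightarrow> int" and t tt :: int and \<alpha>t :: "nat \<Rightarrow> complex"
  defines "OK \<equiv> ring_of_integers K"
    and "L \<equiv> set_mult ff (frac_inv K (ring_of_integers K) bb)"
    and "lam \<equiv> lam_wrt eL u r h'"
    and "lamt \<equiv> lam_wrt eK u r 1"
    and "alin \<equiv> lin_form eL u r h' (lam_wrt eL u r h')"
    and "alint \<equiv> lin_form eK u r 1 (lam_wrt eK u r 1)"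
  assumes K: "number_field_of_degree K (r + 2)"
    and emb: "embeddings_one_complex_pair K r \<sigma>"
    and ff: "integral_ideal OK ff" "ff \<noteq> OK"
    and q: "q > 0" "{x \<in> ff. x \<in> \<int>} = {of_int (q * k) | k. True}"
    and bb: "integral_ideal OK bb" "coprime_ideals OK bb ff"
    and aa: "integral_ideal OK aa" "coprime_ideals OK aa (set_mult ff bb)"
    and N: "N = ideal_index OK aa"
    and cyc: "cyclic_quot (set_mult (frac_inv K OK aa) L) L"
    and adm: "admissible L (set_mult (frac_inv K OK aa) L) q N h"
    and hm: "m > 0" "h = of_int m * h'" "primitive_in L h'"
    and u0: "u 0 = 1"
    and units: "\<forall>j\<in>{1..r}. is_unit_of OK (u j) \<and> totally_positive \<sigma> r (u j) \<and> u j - 1 \<in> ff"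
    and fund: "\<forall>k :: nat \<Rightarrow> int. (\<Prod>j\<in>{1..r}. u j powi k j) = 1 \<longrightarrow> (\<forall>j\<in>{1..r}. k j = 0)"
    and uindep: "Q_indep (map u [0..<r+1])"
    and BL: "Z_basis eL L" "positive_basis \<sigma> (r + 2) eL" "triangular_wrt eL u r h'"
    and SA: "smith_elementary_divisors (coeff_mat eL u r alin) (r + 1) A" "A 0 = 1" "t = A r"
    and BK: "Z_basis eK OK" "positive_basis \<sigma> (r + 2) eK" "triangular_wrt eK u r 1"
    and SAt: "smith_elementary_divisors (coeff_mat eK u r alint) (r + 1) At" "At 0 = 1" "tt = At r"
    and \<alpha>t: "\<forall>j\<le>r. \<alpha>t j \<in> OK \<and> coord eK (\<alpha>t j) 0 = 0
                 \<and> (\<forall>k\<le>r. alint (u k * \<alpha>t j) = (if k = j then of_int tt else 0))"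
  shows "\<exists>\<epsilon>::int. \<epsilon> \<in> {1, -1}
     \<and> uniform_pos_dual_family L (\<lambda>j x. alin (u j * x)) r (\<lambda>j. of_int \<epsilon> * \<alpha>t j * h')
     \<and> (\<exists>l::int. l > 0
          \<and> (\<forall>j\<le>r. \<forall>k\<le>r. alin (u k * (of_int \<epsilon> * \<alpha>t j * h')) = (if k = j then of_int (l * t) else 0))
          \<and> of_rat (of_int \<epsilon> * lam * of_int l * of_int t)
              = elt_norm \<sigma> (r + 2) h' / complex_of_real (frac_ideal_norm OK (r + 2) L)
                * of_rat lamt * of_int tt)"
proof -
  let ?d = "r + 2"
  have sf: "is_subfield K" using K unfolding number_field_of_degree_def by simp
  have OKK: "OK \<subseteq> K" unfolding OK_def ring_of_integers_def by auto
  have ffid: "is_ideal OK ff" using ff(1) unfolding integral_ideal_def by simp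
  have ffOK: "ff \<subseteq> OK" using ffid unfolding is_ideal_def by simp
  have fiK: "frac_inv K (ring_of_integers K) bb \<subseteq> K" unfolding frac_inv_def by auto
  have LK: "L \<subseteq> K" unfolding L_def using set_mult_sub[OF sf] ffOK OKK fiK by blast
  have Lmod: "a * x \<in> L" if "a \<in> OK" "x \<in> L" for a x
    using set_mult_module[OF ffid that(1)] that(2) unfolding L_def by blast
  have lenL: "length eL = ?d" using BL(2) unfolding positive_basis_def by simp
  have zL: "Z_indep eL" and spL: "Z_span eL = L" using BL(1) unfolding Z_basis_def by auto
  have qL: "Q_indep eL" using Z_indep_Q_indep[OF zL] .
  have eLL: "set eL \<subseteq> L" using set_sub_span[of eL] spL by simp
  have QL: "Q_span eL = K" using Q_span_full[OF K lenL _ qL] eLL LK by auto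
  have lenK: "length eK = ?d" using BK(2) unfolding positive_basis_def by simp
  have zK: "Z_indep eK" and spK: "Z_span eK = OK" using BK(1) unfolding Z_basis_def by auto
  have qK: "Q_indep eK" using Z_indep_Q_indep[OF zK] .
  have eKOK: "set eK \<subseteq> OK" using set_sub_span[of eK] spK by simp
  have QK: "Q_span eK = K" using Q_span_full[OF K lenK _ qK] eKOK OKK by auto
  have h'L: "h' \<in> L" and h'0: "h' \<noteq> 0" using hm(3) unfolding primitive_in_def by auto
  have h'K: "h' \<in> K" using h'L LK by blast
  have uOK: "u j \<in> OK" if "j \<in> {1..r}" for j using units that unfolding is_unit_of_def by auto
  have uK: "u j \<in> K" if "j \<le> r" for j
  proof (cases "j = 0")
    case True then show ?thesis using u0 sf_1[OF sf] by simp
  next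
    case False then show ?thesis using uOK[of j] that OKK by auto
  qed
  have uL: "u j * x \<in> L" if "j \<le> r" "x \<in> L" for j x
  proof (cases "j = 0")
    case True then show ?thesis using u0 that by simp
  next
    case False then show ?thesis using uOK[of j] that Lmod by auto
  qed
  have aOK: "\<alpha>t j \<in> OK" if "j \<le> r" for j using \<alpha>t that by blast
  have aK: "\<alpha>t j \<in> K" if "j \<le> r" for j using aOK[OF that] OKK by blast
  note lfL = lin_form_eq[OF qL lenL BL(3) u0]
  note lfK = lin_form_eq[OF qK lenK BK(3) u0]
  have lamp: "lam > 0" using lfL(1) unfolding lam_def .
  have lamtp: "lamt > 0" using lfK(1) unfolding lamt_def .
  have alin_eq: "alin x = coord eL x (r + 1)" for x using lfL(2) unfolding alin_def .
  have alint_eq: "alint x = coord eK x (r + 1)" for x using lfK(2) unfolding alint_def .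

  define M where "M = mat ?d ?d (\<lambda>(i, l). coord eL (h' * eK ! l) i)"
  have eKK: "eK ! l \<in> K" if "l < ?d" for l using eKOK OKK that lenK by (metis nth_mem subsetD)
  have hKL: "h' * eK ! l \<in> L" if "l < ?d" for l
  proof -
    have "eK ! l \<in> OK" using eKOK that lenK by (metis nth_mem subsetD)
    then show ?thesis using Lmod[of "eK ! l" h'] h'L by (simp add: mult.commute)
  qed
  have key: "lam * alin (h' * v) = det M * (lamt * alint v)" if vK: "v \<in> K" for v
  proof -
    define vs where "vs = map (\<lambda>j. u j * 1) [0..<r+1] @ [v]"
    have lvs: "length vs = ?d" unfolding vs_def by simp
    have vsK: "set vs \<subseteq> Q_span eK" unfolding vs_def QK using uK vK by auto
    have mvs: "map ((*) h') vs = map (\<lambda>j. u j * h') [0..<r+1] @ [h' * v]"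
      unfolding vs_def by (simp add: mult.commute)
    have "lam * alin (h' * v) = det_wrt eL (map (\<lambda>j. u j * h') [0..<r+1] @ [h' * v])"
      unfolding alin_def lin_form_def lam_def[symmetric] using lamp by simp
    also have "\<dots> = det_wrt eL (map ((*) h') vs)" unfolding mvs ..
    also have "\<dots> = det M * det_wrt eK vs"
      unfolding M_def using det_wrt_change[OF qL qK lenL lenK lvs vsK, of h'] hKL QL LK by auto
    also have "det_wrt eK vs = lamt * alint v"
      unfolding alint_def lin_form_def lamt_def[symmetric] vs_def using lamtp by simp
    finally show ?thesis .
  qed

  have embs: "is_embedding K (\<sigma> j)" if "j < ?d" for j using emb that unfolding embeddings_one_complex_pair_def by auto
  define SL where "SL = mat ?d ?d (\<lambda>(j, i). \<sigma> j (eL ! i))"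
  define SK where "SK = mat ?d ?d (\<lambda>(j, i). \<sigma> j (eK ! i))"
  have posL: "\<i> * det SL \<in> \<real>" "Re (\<i> * det SL) > 0" using BL(2) unfolding positive_basis_def SL_def Let_def by auto
  have posK: "\<i> * det SK \<in> \<real>" "Re (\<i> * det SK) > 0" using BK(2) unfolding positive_basis_def SK_def Let_def by auto
  have SL0: "det SL \<noteq> 0" using posL(2) by auto
  have SK0: "det SK \<noteq> 0" using posK(2) by auto
  have eLK: "eL ! k \<in> K" if "k < ?d" for k using eLL LK that lenL by (metis nth_mem subsetD)
  have e1: "det (mat ?d ?d (\<lambda>(j, k). \<sigma> j (h' * eK ! k))) = det SL * of_rat (det M)"
    unfolding SL_def M_def
    by (rule det_sigma_change[OF sf embs qL lenL]) (use eLL LK hKL QL in auto)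
  have e1': "det (mat ?d ?d (\<lambda>(j, k). \<sigma> j (h' * eK ! k))) = elt_norm \<sigma> ?d h' * det SK"
  proof -
    have "mat ?d ?d (\<lambda>(j, k). \<sigma> j (h' * eK ! k)) = mat ?d ?d (\<lambda>(j, k). \<sigma> j h' * \<sigma> j (eK ! k))"
      by (rule eq_matI) (auto simp: emb_mult[OF sf embs h'K eKK])
    also have "\<dots> = mat ?d ?d (\<lambda>(i, j). if i = j then \<sigma> i h' else 0) * SK"
      unfolding SK_def using diag_mult[of ?d "\<lambda>i. \<sigma> i h'" "\<lambda>j k. \<sigma> j (eK ! k)"] by simp
    finally have "det (mat ?d ?d (\<lambda>(j, k). \<sigma> j (h' * eK ! k)))
       = det (mat ?d ?d (\<lambda>(i, j). if i = j then \<sigma> i h' else 0)) * det SK"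
      using det_mult[of "mat ?d ?d (\<lambda>(i, j). if i = j then \<sigma> i h' else 0)" ?d SK] unfolding SK_def by simp
    then show ?thesis unfolding det_diag elt_norm_def by simp
  qed
  have cex: "\<exists>c::nat. c > 0 \<and> (\<forall>x\<in>L. of_nat c * x \<in> OK)"
  proof -
    define D where "D = (\<Prod>k<?d. \<Prod>i<?d. snd (quotient_of (coord eK (eL ! k) i)))"
    have Dpos: "D > 0" unfolding D_def by (intro prod_pos) (simp add: quotient_of_denom_pos')
    have ceL: "of_int D * eL ! k \<in> OK" if k: "k < ?d" for k
    proof -
      have ek: "eL ! k \<in> Q_span eK" using eLK[OF k] QK by simp
      have "coord eK (of_int D * eL ! k) i \<in> \<int>" if i: "i < length eK" for i
      proof -
        have d1: "snd (quotient_of (coord eK (eL ! k) i)) dvd (\<Prod>i<?d. snd (quotient_of (coord eK (eL ! k) i)))"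
          using i lenK by (intro dvd_prodI) auto
        have d2: "(\<Prod>i<?d. snd (quotient_of (coord eK (eL ! k) i))) dvd D" unfolding D_def
          using k by (intro dvd_prodI) auto
        have "snd (quotient_of (coord eK (eL ! k) i)) dvd D" using dvd_trans[OF d1 d2] .
        then show ?thesis using coord_scale[OF qK ek, of "of_int D" i] denom_dvd_Int by simp
      qed
      then have "of_int D * eL ! k \<in> Z_span eK"
        using Z_span_coord[OF qK] Q_span_scale[OF ek, of "of_int D"] by simp
      then show ?thesis using spK by simp
    qed
    have "of_nat (nat D) * x \<in> OK" if x: "x \<in> L" for x
    proof -
      obtain z where xz: "x = Z_comb eL z" using x spL unfolding Z_span_def by auto
      have "of_nat (nat D) * x = (\<Sum>k<?d. of_int (z k) * (of_int D * eL ! k))"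
        unfolding xz Z_comb_def lenL using Dpos by (simp add: sum_distrib_left algebra_simps)
      also have "\<dots> \<in> Z_span eK" by (rule Z_span_sum, rule Z_span_int_mult) (use ceL spK in auto)
      finally show ?thesis using spK by simp
    qed
    then show ?thesis using Dpos by (intro exI[of _ "nat D"]) auto
  qed
  define c where "c = (LEAST c::nat. c > 0 \<and> (\<forall>x\<in>L. of_nat c * x \<in> OK))"
  have cprop: "c > 0" "\<forall>x\<in>L. of_nat c * x \<in> OK" unfolding c_def using LeastI_ex[OF cex] by auto
  define gs where "gs = map (\<lambda>k. of_nat c * eL ! k) [0..<?d]"
  have lgs: "length gs = ?d" unfolding gs_def by simp
  have gsk: "gs ! k = of_nat c * eL ! k" if "k < ?d" for k unfolding gs_def using that nth_map_upt[of k ?d 0] by (simp del: upt_Suc)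
  have eLL': "eL ! k \<in> L" if "k < ?d" for k using eLL that lenL by (metis nth_mem subsetD)
  have "set gs \<subseteq> OK"
  proof
    fix y assume "y \<in> set gs"
    then obtain k where k: "k < ?d" "y = gs ! k" using lgs by (auto simp: in_set_conv_nth)
    then show "y \<in> OK" using gsk[OF k(1)] cprop(2) eLL'[OF k(1)] by simp
  qed
  then have okgs: "okl eK gs"
    unfolding okl_def[OF zK] using lgs lenK spK by simp
  have cL: "(\<lambda>x. of_nat c * x) ` L = Z_span gs"
  proof
    show "(\<lambda>x. of_nat c * x) ` L \<subseteq> Z_span gs"
    proof
      fix y assume "y \<in> (\<lambda>x. of_nat c * x) ` L"
      then obtain z where "y = of_nat c * Z_comb eL z" using spL unfolding Z_span_def by auto
      then have "y = Z_comb gs z" unfolding Z_comb_def lgs lenL by (simp add: sum_distrib_left gsk algebra_simps)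
      then show "y \<in> Z_span gs" unfolding Z_span_def by simp
    qed
    show "Z_span gs \<subseteq> (\<lambda>x. of_nat c * x) ` L"
    proof
      fix y assume "y \<in> Z_span gs"
      then obtain z where "y = Z_comb gs z" unfolding Z_span_def by auto
      then have "y = of_nat c * Z_comb eL z" unfolding Z_comb_def lgs lenL by (simp add: sum_distrib_left gsk algebra_simps)
      moreover have "Z_comb eL z \<in> L" using spL unfolding Z_span_def by auto
      ultimately show "y \<in> (\<lambda>x. of_nat c * x) ` L" by blast
    qed
  qed
  define P where "P = cm eK gs"
  have e2: "det (mat ?d ?d (\<lambda>(j, k). \<sigma> j (of_nat c * eL ! k))) = det SK * of_rat (det P)"
  proof -
    have "det (mat ?d ?d (\<lambda>(j, k). \<sigma> j (of_nat c * eL ! k)))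
        = det SK * of_rat (det (mat ?d ?d (\<lambda>(i, k). coord eK (of_nat c * eL ! k) i)))"
      unfolding SK_def
      by (rule det_sigma_change[OF sf embs qK lenK]) (use eKOK OKK eLK QK sf_mult[OF sf sf_of_nat[OF sf]] in auto)
    moreover have "mat ?d ?d (\<lambda>(i, k). coord eK (of_nat c * eL ! k) i) = transpose_mat P"
      unfolding P_def cm_def lenK by (rule eq_matI) (auto simp: gsk)
    moreover have "det (transpose_mat P) = det P" unfolding P_def cm_def by (rule det_transpose[of _ "length eK"]) simp
    ultimately show ?thesis by simp
  qed
  have e2': "det (mat ?d ?d (\<lambda>(j, k). \<sigma> j (of_nat c * eL ! k))) = of_nat c ^ ?d * det SL"
  proof -
    have "mat ?d ?d (\<lambda>(j, k). \<sigma> j (of_nat c * eL ! k)) = of_nat c \<cdot>\<^sub>m SL"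
      unfolding SL_def by (rule eq_matI)
        (auto simp: emb_mult[OF sf embs sf_of_nat[OF sf] eLK] emb_of_nat[OF sf embs])
    then show ?thesis unfolding SL_def by simp
  qed
  have Pc: "of_rat (det P) = of_nat c ^ ?d * (\<i> * det SL) / (\<i> * det SK)"
    using e2 e2' SK0 by (simp add: field_simps)
  have "complex_of_real (real_of_rat (det P)) = of_nat c ^ ?d * complex_of_real (Re (\<i> * det SL)) / complex_of_real (Re (\<i> * det SK))"
    unfolding cr_rat Pc of_real_Re[OF posL(1)] of_real_Re[OF posK(1)] ..
  also have "\<dots> = complex_of_real (real c ^ ?d * Re (\<i> * det SL) / Re (\<i> * det SK))" by (simp only: of_real_mult of_real_divide of_real_power of_real_of_nat_eq)
  finally have "real_of_rat (det P) = real c ^ ?d * Re (\<i> * det SL) / Re (\<i> * det SK)"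
    by (simp only: of_real_eq_iff)
  moreover have "real c ^ ?d * Re (\<i> * det SL) / Re (\<i> * det SK) > 0"
    using posL(2) posK(2) cprop(1) by (intro divide_pos_pos mult_pos_pos) auto
  ultimately have "real_of_rat (det P) > 0" by (simp only:)
  then have Ppos: "det P > 0" by (simp add: zero_less_of_rat_iff)
  have idx: "of_nat (ideal_index OK ((\<lambda>x. of_nat c * x) ` L)) = det P"
    using index_det[OF zK okgs] Ppos unfolding ideal_index_cosets cL P_def spK by simp
  have FN: "frac_ideal_norm OK ?d L = real_of_rat (det P) / real c ^ ?d"
    unfolding frac_ideal_norm_def Let_def c_def[symmetric]
    using arg_cong[OF idx, of real_of_rat] by simp
  have MN: "of_rat (det M) = elt_norm \<sigma> ?d h' / complex_of_real (frac_ideal_norm OK ?d L)"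
  proof -
    have m1: "of_rat (det M) = elt_norm \<sigma> ?d h' * det SK / det SL" using e1 e1' SL0 by (simp add: field_simps)
    have "complex_of_real (frac_ideal_norm OK ?d L) = of_rat (det P) / of_nat c ^ ?d"
      unfolding FN by (simp add: cr_rat[symmetric])
    also have "\<dots> = det SL / det SK" unfolding Pc using cprop(1) SK0 by (simp add: field_simps)
    finally have F: "complex_of_real (frac_ideal_norm OK ?d L) = det SL / det SK" .
    show ?thesis unfolding m1 F using SL0 SK0 by (simp add: field_simps)
  qed

  have N0: "elt_norm \<sigma> ?d h' \<noteq> 0" unfolding elt_norm_def
    using emb_nonzero[OF sf embs h'K h'0] by (simp add: prod_zero_iff)
  have FNpos: "frac_ideal_norm OK ?d L > 0" unfolding FN using Ppos cprop(1) by (simp add: zero_less_of_rat_iff)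
  have M0: "det M \<noteq> 0"
  proof
    assume "det M = 0"
    then have "elt_norm \<sigma> ?d h' / complex_of_real (frac_ideal_norm OK ?d L) = 0" using MN by simp
    then show False using N0 FNpos by simp
  qed
  have eK0: "eK ! 0 = 1" using BK(3) unfolding triangular_wrt_def by simp
  have uK0: "coord eK (u j) (r + 1) = 0" if "j \<le> r" for j
  proof (cases "j = 0")
    case True then show ?thesis using coord_basis[OF qK, of 0 "r+1"] lenK eK0 u0 by simp
  next
    case False then show ?thesis using BK(3) that unfolding triangular_wrt_def by auto
  qed
  define AtM where "AtM = coeff_mat eK u r alint"
  have AtC: "AtM \<in> carrier_mat (r+1) (r+1)" unfolding AtM_def coeff_mat_def by simp
  have AtE: "AtM $$ (j, k) = coord eK (u j * eK ! (k+1)) (r+1)" if "j \<le> r" "k \<le> r" for j k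
    unfolding AtM_def coeff_mat_def using that by (simp add: alint_eq)
  have detAt: "det AtM \<noteq> 0"
  proof
    assume "det AtM = 0"
    then have "det (transpose_mat AtM) = 0" using det_transpose[OF AtC] by simp
    then obtain v where v: "v \<in> carrier_vec (r+1)" "v \<noteq> 0\<^sub>v (r+1)" "transpose_mat AtM *\<^sub>v v = 0\<^sub>v (r+1)"
      using det_0_iff_vec_prod_zero_field[of "transpose_mat AtM" "r+1"] AtC by auto
    define w where "w = Q_comb (map u [0..<r+1]) (\<lambda>j. v $ j)"
    have wK: "w \<in> K" unfolding w_def by (rule Q_comb_in[OF sf]) (use uK in auto)
    have w0: "w \<noteq> 0"
    proof
      assume "w = 0"
      then have "\<forall>j<r+1. v $ j = 0" using uindep unfolding Q_indep_def w_def by auto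
      then have "v = 0\<^sub>v (r+1)" using v(1) by (intro eq_vecI) auto
      then show False using v(2) by simp
    qed
    have wexp: "w * y = (\<Sum>j<r+1. of_rat (v $ j) * (u j * y))" for y
    proof -
      have "w * y = (\<Sum>j<r+1. of_rat (v $ j) * map u [0..<r+1] ! j * y)"
        unfolding w_def Q_comb_def by (simp add: sum_distrib_right distrib_right)
      also have "\<dots> = (\<Sum>j<r+1. of_rat (v $ j) * (u j * y))"
        by (intro sum.cong) (simp_all del: upt_Suc add: nth_map_upt mult.assoc)
      finally show ?thesis .
    qed
    have lin: "coord eK (w * y) (r+1) = (\<Sum>j<r+1. v $ j * coord eK (u j * y) (r+1))" if yK: "y \<in> K" for y
    proof -
      have uy: "u j * y \<in> Q_span eK" if "j < r+1" for j using uK[of j] yK that sf_mult[OF sf] QK by auto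
      show ?thesis unfolding wexp
        by (subst coord_sum[OF qK]) (auto intro!: Q_span_scale uy sum.cong simp: coord_scale[OF qK uy])
    qed
    have zb: "coord eK (w * eK ! l) (r+1) = 0" if l: "l < ?d" for l
    proof (cases "l = 0")
      case True
      then show ?thesis using lin[of "eK ! 0"] eK0 uK0 sf_1[OF sf] by simp
    next
      case False
      then obtain k where k: "l = k + 1" "k \<le> r" using l by (cases l) auto
      have "(transpose_mat AtM *\<^sub>v v) $ k = 0" using v(3) k by simp
      then have "(\<Sum>j<r+1. AtM $$ (j, k) * v $ j) = 0"
        using AtC v(1) k by (simp add: scalar_prod_def atLeast0LessThan)
      then have "(\<Sum>j<r+1. v $ j * coord eK (u j * eK ! l) (r+1)) = 0"
        using AtE k by (simp add: mult.commute)
      then show ?thesis using lin[OF eKK[OF l]] by simp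
    qed
    have allz: "coord eK (w * y) (r+1) = 0" if yK: "y \<in> K" for y
    proof -
      have yq: "y \<in> Q_span eK" using yK QK by simp
      have "w * y = w * (\<Sum>l<?d. of_rat (coord eK y l) * eK ! l)"
        using Q_comb_coord[OF qK yq] unfolding Q_comb_def lenK by simp
      also have "\<dots> = (\<Sum>l<?d. of_rat (coord eK y l) * (w * eK ! l))"
        unfolding sum_distrib_left by (rule sum.cong) (simp_all add: mult.left_commute)
      finally have e: "w * y = (\<Sum>l<?d. of_rat (coord eK y l) * (w * eK ! l))" .
      have wl: "w * eK ! l \<in> Q_span eK" if "l < ?d" for l using sf_mult[OF sf wK eKK[OF that]] QK by simp
      have "coord eK (w * y) (r+1) = (\<Sum>l<?d. coord eK (of_rat (coord eK y l) * (w * eK ! l)) (r+1))"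
        unfolding e by (rule coord_sum[OF qK]) (use Q_span_scale wl in auto)
      also have "\<dots> = (\<Sum>l<?d. coord eK y l * coord eK (w * eK ! l) (r+1))"
        by (rule sum.cong) (auto simp: coord_scale[OF qK wl])
      also have "\<dots> = 0"
      proof (rule sum.neutral, rule ballI)
        fix l assume "l \<in> {..<?d}"
        then have "coord eK (w * eK ! l) (r+1) = 0" using zb by simp
        then show "coord eK y l * coord eK (w * eK ! l) (r+1) = 0" by simp
      qed
      finally show ?thesis .
    qed
    have "eK ! (r+1) / w \<in> K" using sf_divide[OF sf eKK wK] by simp
    then have "coord eK (w * (eK ! (r+1) / w)) (r+1) = 0" by (rule allz)
    moreover have "w * (eK ! (r+1) / w) = eK ! (r+1)" using w0 by simp
    ultimately show False using coord_basis[OF qK, of "r+1" "r+1"] lenK by simp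
  qed
  have ttpos: "tt > 0"
  proof -
    obtain Pt Qt where Pt: "Pt \<in> carrier_mat (r+1) (r+1)" and Qt: "Qt \<in> carrier_mat (r+1) (r+1)"
      and dPt: "det Pt \<in> {1, -1}" and dQt: "det Qt \<in> {1, -1}"
      and PAQ: "Pt * AtM * Qt = mat (r+1) (r+1) (\<lambda>(i, j). if i = j then of_int (At i) else 0)"
      using SAt(1) unfolding smith_elementary_divisors_def AtM_def by blast
    have nn: "\<forall>i<r+1. 0 \<le> At i" using SAt(1) unfolding smith_elementary_divisors_def by blast
    have "det (Pt * AtM * Qt) = det Pt * det AtM * det Qt"
      using det_mult[OF mult_carrier_mat[OF Pt AtC] Qt] det_mult[OF Pt AtC] by simp
    moreover have "det (Pt * AtM * Qt) = (\<Prod>i<r+1. of_int (At i))" unfolding PAQ by (rule det_diag)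
    ultimately have "det Pt * det AtM * det Qt = (\<Prod>i<r+1. of_int (At i))" by simp
    moreover have "det Pt * det AtM * det Qt \<noteq> 0" using dPt dQt detAt by auto
    ultimately have "At r \<noteq> 0" by auto
    then show ?thesis using nn SAt(3) by force
  qed

  define \<epsilon> :: int where "\<epsilon> = (if det M > 0 then 1 else -1)"
  have eps: "\<epsilon> \<in> {1, -1}" unfolding \<epsilon>_def by simp
  have epsM: "of_int \<epsilon> * det M = \<bar>det M\<bar>" unfolding \<epsilon>_def using M0 by auto
  have eps2: "of_int \<epsilon> * of_int \<epsilon> = (1::rat)" unfolding \<epsilon>_def by simp
  define \<alpha> where "\<alpha> j = of_int \<epsilon> * \<alpha>t j * h'" for j
  have \<alpha>L: "\<alpha> j \<in> L" if j: "j \<le> r" for j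
  proof -
    have "\<alpha>t j * h' \<in> L" using Lmod[OF aOK[OF j] h'L] .
    then have "of_int \<epsilon> * (\<alpha>t j * h') \<in> L" using Z_span_int_mult[of _ eL \<epsilon>] spL by simp
    then show ?thesis unfolding \<alpha>_def by (simp add: mult.assoc)
  qed
  define V where "V = \<bar>det M\<bar> * lamt * of_int tt / lam"
  have val: "alin (u k * \<alpha> j) = (if k = j then V else 0)" if jk: "j \<le> r" "k \<le> r" for j k
  proof -
    have ua: "u k * \<alpha>t j \<in> K" using sf_mult[OF sf uK[OF jk(2)] aK[OF jk(1)]] .
    define v where "v = of_int \<epsilon> * (u k * \<alpha>t j)"
    have vK: "v \<in> K" unfolding v_def using sf_mult[OF sf sf_of_int[OF sf] ua] .
    have e: "u k * \<alpha> j = h' * v" unfolding \<alpha>_def v_def by (simp add: algebra_simps)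
    have "alint v = of_int \<epsilon> * alint (u k * \<alpha>t j)"
      unfolding alint_eq v_def using coord_scale[OF qK, of "u k * \<alpha>t j" "of_int \<epsilon>" "r+1"] ua QK by simp
    also have "alint (u k * \<alpha>t j) = (if k = j then of_int tt else 0)" using \<alpha>t jk by blast
    finally have "lam * alin (u k * \<alpha> j) = det M * (lamt * (of_int \<epsilon> * (if k = j then of_int tt else 0)))"
      using key[OF vK] unfolding e by simp
    then have "alin (u k * \<alpha> j) = (of_int \<epsilon> * det M) * lamt * (if k = j then of_int tt else 0) / lam"
      using lamp by (simp add: field_simps)
    then show ?thesis unfolding epsM V_def by simp
  qed
  have Vpos: "V > 0" unfolding V_def using M0 lamtp ttpos lamp by simp
  have VInt: "V \<in> \<int>"
  proof -
    have "V = alin (u 0 * \<alpha> 0)" using val[of 0 0] by simp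
    also have "\<dots> = coord eL (u 0 * \<alpha> 0) (r+1)" by (rule alin_eq)
    finally show ?thesis using coord_Z_span[OF qL] uL[OF _ \<alpha>L] spL by simp
  qed
  obtain nV where nV: "V = of_int nV" using VInt by (auto elim: Ints_cases)
  have nVpos: "nV > 0" using Vpos nV by simp
  define AM where "AM = coeff_mat eL u r alin"
  define Y where "Y = mat (r+1) (r+1) (\<lambda>(i, j). coord eL (\<alpha> j) (i+1))"
  have AMC: "AM \<in> carrier_mat (r+1) (r+1)" unfolding AM_def coeff_mat_def by simp
  have YC: "Y \<in> carrier_mat (r+1) (r+1)" unfolding Y_def by simp
  have eL0: "eL ! 0 = h'" using BL(3) unfolding triangular_wrt_def by simp
  have uh0: "coord eL (u k * eL ! 0) (r+1) = 0" if "k \<le> r" for k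
  proof (cases "k = 0")
    case True then show ?thesis using coord_basis[OF qL, of 0 "r+1"] lenL u0 by simp
  next
    case False then show ?thesis using BL(3) that eL0 unfolding triangular_wrt_def by auto
  qed
  have expand: "alin (u k * x) = (\<Sum>i<r+1. alin (u k * eL ! (i+1)) * coord eL x (i+1))"
    if k: "k \<le> r" and xK: "x \<in> K" for k x
  proof -
    have xq: "x \<in> Q_span eL" using xK QL by simp
    have ue: "u k * eL ! i \<in> Q_span eL" if "i < ?d" for i using sf_mult[OF sf uK[OF k] eLK[OF that]] QL by simp
    have "u k * x = u k * (\<Sum>i<?d. of_rat (coord eL x i) * eL ! i)"
      using Q_comb_coord[OF qL xq] unfolding Q_comb_def lenL by simp
    also have "\<dots> = (\<Sum>i<?d. of_rat (coord eL x i) * (u k * eL ! i))"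
      unfolding sum_distrib_left by (rule sum.cong) (simp_all add: mult.left_commute)
    finally have e: "u k * x = (\<Sum>i<?d. of_rat (coord eL x i) * (u k * eL ! i))" .
    have "alin (u k * x) = (\<Sum>i<?d. coord eL (of_rat (coord eL x i) * (u k * eL ! i)) (r+1))"
      unfolding alin_eq e by (rule coord_sum[OF qL]) (use Q_span_scale ue in auto)
    also have "\<dots> = (\<Sum>i<Suc (r+1). coord eL x i * coord eL (u k * eL ! i) (r+1))"
      by (rule sum.cong) (auto simp: coord_scale[OF qL ue])
    also have "\<dots> = coord eL x 0 * coord eL (u k * eL ! 0) (r+1) + (\<Sum>i<r+1. coord eL x (Suc i) * coord eL (u k * eL ! (Suc i)) (r+1))"
      by (rule sum.lessThan_Suc_shift)
    also have "\<dots> = (\<Sum>i<r+1. alin (u k * eL ! (i+1)) * coord eL x (i+1))"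
      using uh0[OF k] by (simp add: alin_eq mult.commute)
    finally show ?thesis .
  qed
  have AY: "AM * Y = of_int nV \<cdot>\<^sub>m 1\<^sub>m (r+1)"
  proof (rule eq_matI)
    fix k j assume kj: "k < dim_row (of_int nV \<cdot>\<^sub>m 1\<^sub>m (r+1) :: rat mat)" "j < dim_col (of_int nV \<cdot>\<^sub>m 1\<^sub>m (r+1) :: rat mat)"
    then have kj': "k \<le> r" "j \<le> r" by auto
    have "(AM * Y) $$ (k, j) = (\<Sum>i<r+1. alin (u k * eL ! (i+1)) * coord eL (\<alpha> j) (i+1))"
      using AMC YC kj' by (simp add: AM_def Y_def coeff_mat_def scalar_prod_def atLeast0LessThan)
    also have "\<dots> = alin (u k * \<alpha> j)" using expand[OF kj'(1)] \<alpha>L[OF kj'(2)] LK by auto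
    also have "\<dots> = (of_int nV \<cdot>\<^sub>m 1\<^sub>m (r+1)) $$ (k, j)" using val[OF kj'(2,1)] nV kj' by simp
    finally show "(AM * Y) $$ (k, j) = (of_int nV \<cdot>\<^sub>m 1\<^sub>m (r+1)) $$ (k, j)" .
  qed (use AMC YC in auto)
  have AMi: "int_mat AM" unfolding int_mat_def
  proof (intro allI impI)
    fix k i assume "k < dim_row AM" "i < dim_col AM"
    then have ki: "k \<le> r" "i \<le> r" using AMC by auto
    have "u k * eL ! (i+1) \<in> L" using uL[OF ki(1) eLL'] ki by simp
    then show "AM $$ (k, i) \<in> \<int>"
      unfolding AM_def coeff_mat_def using ki alin_eq coord_Z_span[OF qL] spL by simp
  qed
  have Yi: "int_mat Y" unfolding int_mat_def
  proof (intro allI impI)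
    fix i j assume "i < dim_row Y" "j < dim_col Y"
    then have ij: "i \<le> r" "j \<le> r" using YC by auto
    then show "Y $$ (i, j) \<in> \<int>" unfolding Y_def using \<alpha>L[OF ij(2)] coord_Z_span[OF qL] spL by simp
  qed
  have tdvd: "t dvd nV" using smith_dvd[OF SA(1) _ AMC[unfolded AM_def] AMi[unfolded AM_def] YC Yi AY[unfolded AM_def]] SA(3) by simp
  have tnn: "t \<ge> 0" using SA(1) SA(3) unfolding smith_elementary_divisors_def by auto
  have t0: "t \<noteq> 0" using tdvd nVpos by auto
  define l where "l = nV div t"
  have lt: "l * t = nV" unfolding l_def using tdvd by simp
  have lpos: "l > 0" using lt nVpos tnn t0 by (metis zero_less_mult_pos2 less_le)
  have fam: "uniform_pos_dual_family L (\<lambda>j x. alin (u j * x)) r (\<lambda>j. of_int \<epsilon> * \<alpha>t j * h')"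
    unfolding uniform_pos_dual_family_def pos_dual_family_def \<alpha>_def[symmetric]
    using \<alpha>L val Vpos by auto
  have vals: "\<forall>j\<le>r. \<forall>k\<le>r. alin (u k * (of_int \<epsilon> * \<alpha>t j * h')) = (if k = j then of_int (l * t) else 0)"
    unfolding \<alpha>_def[symmetric] using val nV lt by simp
  have "of_int \<epsilon> * lam * of_int l * of_int t = of_int \<epsilon> * lam * V"
    using nV lt by (simp flip: of_int_mult)
  also have "\<dots> = (of_int \<epsilon> * of_int \<epsilon>) * det M * lamt * of_int tt"
    unfolding V_def using lamp M0 unfolding \<epsilon>_def by (auto simp: field_simps)
  also have "\<dots> = det M * lamt * of_int tt" using eps2 by simp
  finally have fe: "of_int \<epsilon> * lam * of_int l * of_int t = det M * lamt * of_int tt" .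
  have eq: "of_rat (of_int \<epsilon> * lam * of_int l * of_int t)
      = elt_norm \<sigma> (r + 2) h' / complex_of_real (frac_ideal_norm OK (r + 2) L) * of_rat lamt * of_int tt"
    unfolding fe by (simp add: of_rat_mult MN)
  show ?thesis using eps fam vals lpos eq by blast
qed

end
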